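(* Let $L\in\mathcal K(\partial)$ be a rational operator with minimal right fractional decomposition $L=AB^{-1}$. Then the following are equivalent: (1) $L$ is weakly non-local with coefficients in $\mathcal K$, i.e. $L=E+\sum_{i}p_i\partial^{-1}q_i$ for some $E\in\mathcal K[\partial]$ and $p_i,q_i\in\mathcal K$; (2) $B$ has a full kernel in $\mathcal K$; (3) $B^*$ has a full kernel in $\mathcal K$. Moreover, if $L=E+\sum_{i=1}^np_i\partial^{-1}q_i$ with $E\in\mathcal K[\partial]$ and with $\{p_1,\dots,p_n\}$ and $\{q_1,\dots,q_n\}$ each linearly independent elements of $\mathcal K$, then $d(B)=n$, $B$ is a right least common multiple of the differential operators $\frac{1}{q_i}\partial$ ($i=1,\dots,n$), and $\operatorname{Ker}B^*$ is spanned over $\mathcal C$ by $q_1,\dots,q_n$.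
   Context: $\mathcal V$ is an algebra of differential functions in one variable $u$ (commutative $\mathbb C$-algebra containing $R=\mathbb C[u,u',\dots]$ with commuting derivations $\partial/\partial u^{(n)}$ extending those of $R$ and $\partial/\partial x$ commuting with them and vanishing on $R$, each element having finitely many nonzero partial derivatives); total derivative $\partial=\sum_nu^{(n+1)}\frac{\partial}{\partial u^{(n)}}+\frac{\partial}{\partial x}$. Standing assumptions: $\mathcal V$ is a normal domain with fraction field $\mathcal K$; $\mathcal C=\ker\partial$ is algebraically closed. Operators: $\mathcal K[\partial]$ with $\partial a=a\partial+a'$; pseudodifferential with $\partial^{-1}a=\sum_{n\ge0}(-1)^na^{(n)}\partial^{-n-1}$; $\mathcal K(\partial)$ is the field of rational operators $AB^{-1}$. $d(B)$ denotes the degree in $\partial$. $(A_0,B_0)$ is a minimal right fractional decomposition of $L$ if $L=A_0B_0^{-1}$ and every $(A,B)$ with $L=AB^{-1}$ satisfies $A=A_0D$, $B=B_0D$ for a differential operator $D$. The adjoint $*$ is the anti-involution with $\partial^*=-\partial$, $f^*=f$. A differential operator $P$ has full kernel in $\mathcal K$ if $\dim_{\mathcal C}\operatorname{Ker}_{\mathcal K}P=d(P)$. A right least common multiple of operators $P_1,\dots,P_n$ is a generator of the right ideal $\bigcap_iP_i\mathcal K[\partial]$. *)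

theory Defs
  imports Main "HOL-Computational_Algebra.Polynomial"
begin

text \<open>A differential field: a field of characteristic 0 (type class) with a derivation der,
  whose field of constants C = {c. der c = 0} is algebraically closed.\<close>

definition diff_field :: "('a::field_char_0 \<Rightarrow> 'a) \<Rightarrow> bool" where
  "diff_field der \<longleftrightarrow>
     (\<forall>a b. der (a + b) = der a + der b) \<and>
     (\<forall>a b. der (a * b) = der a * b + a * der b) \<and>
     (\<forall>p :: 'a poly. 0 < degree p \<and> (\<forall>i. der (coeff p i) = 0)
         \<longrightarrow> (\<exists>x. der x = 0 \<and> poly p x = 0))"

text \<open>Pseudodifferential operators: P represents sum over n of (P n) times the n-th power of
  the derivation symbol, with support bounded above.\<close>

type_synonym 'a pdo = "int \<Rightarrow> 'a"

definition is_pdo :: "'a::zero pdo \<Rightarrow> bool" where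
  "is_pdo P \<longleftrightarrow> (\<exists>N. \<forall>n>N. P n = 0)"

definition is_diffop :: "'a::zero pdo \<Rightarrow> bool" where
  "is_diffop P \<longleftrightarrow> is_pdo P \<and> (\<forall>n<0. P n = 0)"

definition dord :: "'a::zero pdo \<Rightarrow> nat" where
  "dord P = nat (Max {n. P n \<noteq> 0})"

text \<open>Product of pseudodifferential operators:
  (a D^m)(b D^n) = sum over k of (m gchoose k) a b^(k) D^(m+n-k).\<close>
definition pmult :: "('a::field_char_0 \<Rightarrow> 'a) \<Rightarrow> 'a pdo \<Rightarrow> 'a pdo \<Rightarrow> 'a pdo" where
  "pmult der P Q = (\<lambda>j. \<Sum>(m, k) \<in> {(m, k::nat). P m \<noteq> 0 \<and> Q (j + int k - m) \<noteq> 0}.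
        ((of_int m :: 'a) gchoose k) * P m * (der ^^ k) (Q (j + int k - m)))"

definition apply_op :: "('a::field_char_0 \<Rightarrow> 'a) \<Rightarrow> 'a pdo \<Rightarrow> 'a \<Rightarrow> 'a" where
  "apply_op der P f = (\<Sum>n \<in> {n. P n \<noteq> 0}. P n * (der ^^ nat n) f)"

definition kernel :: "('a::field_char_0 \<Rightarrow> 'a) \<Rightarrow> 'a pdo \<Rightarrow> 'a set" where
  "kernel der P = {f. apply_op der P f = 0}"

definition lin_indep_C :: "('a::field_char_0 \<Rightarrow> 'a) \<Rightarrow> nat \<Rightarrow> (nat \<Rightarrow> 'a) \<Rightarrow> bool" where
  "lin_indep_C der n f \<longleftrightarrow>
     (\<forall>c. (\<forall>i<n. der (c i) = 0) \<and> (\<Sum>i<n. c i * f i) = 0 \<longrightarrow> (\<forall>i<n. c i = 0))"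

definition span_C :: "('a::field_char_0 \<Rightarrow> 'a) \<Rightarrow> nat \<Rightarrow> (nat \<Rightarrow> 'a) \<Rightarrow> 'a set" where
  "span_C der n f = {\<Sum>i<n. c i * f i | c. \<forall>i<n. der (c i) = 0}"

definition full_kernel :: "('a::field_char_0 \<Rightarrow> 'a) \<Rightarrow> 'a pdo \<Rightarrow> bool" where
  "full_kernel der P \<longleftrightarrow>
     (\<exists>b. lin_indep_C der (dord P) b \<and> span_C der (dord P) b = kernel der P)"

text \<open>Formal adjoint of a differential operator: (a D^n)^* = (-D)^n a.\<close>
definition adjoint :: "('a::field_char_0 \<Rightarrow> 'a) \<Rightarrow> 'a pdo \<Rightarrow> 'a pdo" where
  "adjoint der P = (\<lambda>j. if j < 0 then 0 else
      (\<Sum>n \<in> {n. P n \<noteq> 0 \<and> j \<le> n}.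
         (-1) ^ nat n * of_nat (nat n choose nat (n - j)) * (der ^^ nat (n - j)) (P n)))"

text \<open>L = A B^{-1} with A, B differential operators, B nonzero (equivalently L B = A).\<close>
definition right_frac :: "('a::field_char_0 \<Rightarrow> 'a) \<Rightarrow> 'a pdo \<Rightarrow> 'a pdo \<Rightarrow> 'a pdo \<Rightarrow> bool" where
  "right_frac der L A B \<longleftrightarrow> is_diffop A \<and> is_diffop B \<and> (\<exists>n. B n \<noteq> 0) \<and> pmult der L B = A"

definition minimal_rfd :: "('a::field_char_0 \<Rightarrow> 'a) \<Rightarrow> 'a pdo \<Rightarrow> 'a pdo \<Rightarrow> 'a pdo \<Rightarrow> bool" where
  "minimal_rfd der L A B \<longleftrightarrow> right_frac der L A B \<and>
     (\<forall>A' B'. right_frac der L A' B' \<longrightarrow>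
        (\<exists>D. is_diffop D \<and> A' = pmult der A D \<and> B' = pmult der B D))"

text \<open>The operator E + sum_{i<n} p_i D^{-1} q_i, where
  p D^{-1} q = sum_{k>=0} (-1)^k p q^(k) D^{-k-1}.\<close>
definition wnl_form :: "('a::field_char_0 \<Rightarrow> 'a) \<Rightarrow> 'a pdo \<Rightarrow> nat \<Rightarrow> (nat \<Rightarrow> 'a) \<Rightarrow> (nat \<Rightarrow> 'a) \<Rightarrow> 'a pdo" where
  "wnl_form der E n p q = (\<lambda>j. E j + (if j < 0 then
      (\<Sum>i<n. p i * (-1) ^ nat (- j - 1) * (der ^^ nat (- j - 1)) (q i)) else 0))"

definition weakly_nonlocal :: "('a::field_char_0 \<Rightarrow> 'a) \<Rightarrow> 'a pdo \<Rightarrow> bool" where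
  "weakly_nonlocal der L \<longleftrightarrow> (\<exists>E n p q. is_diffop E \<and> L = wnl_form der E n p q)"

definition is_right_lcm :: "('a::field_char_0 \<Rightarrow> 'a) \<Rightarrow> 'a pdo \<Rightarrow> nat \<Rightarrow> (nat \<Rightarrow> 'a pdo) \<Rightarrow> bool" where
  "is_right_lcm der B n P \<longleftrightarrow> is_diffop B \<and>
     (\<forall>i<n. \<exists>X. is_diffop X \<and> B = pmult der (P i) X) \<and>
     (\<forall>M. is_diffop M \<and> (\<forall>i<n. \<exists>Y. is_diffop Y \<and> M = pmult der (P i) Y)
          \<longrightarrow> (\<exists>Z. is_diffop Z \<and> M = pmult der B Z))"

definition inv_coeff_D :: "'a::field \<Rightarrow> 'a pdo" where
  "inv_coeff_D q = (\<lambda>j. if j = 1 then inverse q else 0)"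

end

theory Submission
  imports Defs "HOL-Computational_Algebra.Formal_Power_Series"
begin

locale dfld =
  fixes der :: "'a::field_char_0 \<Rightarrow> 'a"
  assumes dadd: "\<And>a b. der (a + b) = der a + der b"
    and dmult: "\<And>a b. der (a * b) = der a * b + a * der b"
begin

abbreviation dk :: "nat \<Rightarrow> 'a \<Rightarrow> 'a" where "dk k \<equiv> der ^^ k"

lemma der0[simp]: "der 0 = 0"
  using dadd[of 0 0] by simp

lemma der1[simp]: "der 1 = 0"
  using dmult[of 1 1] by simp

lemma dminus[simp]: "der (- a) = - der a"
  using dadd[of a "-a"] by (simp add: eq_neg_iff_add_eq_0 add.commute)

lemma ddiff: "der (a - b) = der a - der b"
  using dadd[of a "-b"] by simp

lemma dsum: "der (\<Sum>i\<in>S. f i) = (\<Sum>i\<in>S. der (f i))"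
  by (induction S rule: infinite_finite_induct) (auto simp: dadd)

lemma dof_nat[simp]: "der (of_nat n) = 0"
  by (induction n) (auto simp: dadd)

lemma dof_int[simp]: "der (of_int n) = 0"
  by (cases n rule: int_cases) (auto simp: dof_nat ddiff)

lemma dconst_mult: "der c = 0 \<Longrightarrow> der (c * a) = c * der a"
  by (simp add: dmult)

lemma dinverse: "a \<noteq> 0 \<Longrightarrow> der (inverse a) = - der a * inverse a * inverse a"
proof -
  assume a: "a \<noteq> 0"
  have "der (a * inverse a) = 0" using a by simp
  hence "der a * inverse a + a * der (inverse a) = 0" by (simp add: dmult)
  hence "a * der (inverse a) = - der a * inverse a"
    by (metis add_diff_cancel_left' diff_0 mult_minus_left)
  hence "inverse a * (a * der (inverse a)) = inverse a * (- der a * inverse a)" by simp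
  thus ?thesis using a by (simp add: field_simps)
qed


lemma dk_add: "dk k (a + b) = dk k a + dk k b"
  by (induction k) (auto simp: dadd)

lemma dk0[simp]: "dk k 0 = 0"
  by (induction k) auto

lemma dk_minus: "dk k (- a) = - dk k a"
  by (induction k) auto

lemma dk_diff: "dk k (a - b) = dk k a - dk k b"
  by (induction k) (auto simp: ddiff)

lemma dk_sum: "dk k (\<Sum>i\<in>S. f i) = (\<Sum>i\<in>S. dk k (f i))"
  by (induction k) (auto simp: dsum)

lemma dk_const_mult: "der c = 0 \<Longrightarrow> dk k (c * a) = c * dk k a"
  by (induction k) (auto simp: dconst_mult)

lemma dk_const': "der c = 0 \<Longrightarrow> dk k c = (if k = 0 then c else 0)"
  by (induction k) auto

lemma dk_const: "der c = 0 \<Longrightarrow> 0 < k \<Longrightarrow> dk k c = 0"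
  by (simp add: dk_const')

lemma dk_Suc': "dk (Suc k) a = dk k (der a)"
  by (simp only: funpow_Suc_right comp_def)

lemma dk_add_nat: "dk (i + j) a = dk i (dk j a)"
  by (simp add: funpow_add)

lemma leibniz: "dk n (a * b) = (\<Sum>k\<le>n. of_nat (n choose k) * dk k a * dk (n - k) b)"
proof (induction n)
  case 0
  then show ?case by simp
next
  case (Suc n)
  define f where "f k = dk k a * dk (Suc n - k) b" for k
  have "dk (Suc n) (a * b) = der (\<Sum>k\<le>n. of_nat (n choose k) * dk k a * dk (n - k) b)"
    using Suc.IH by simp
  also have "\<dots> = (\<Sum>k\<le>n. of_nat (n choose k) * (dk (Suc k) a * dk (n-k) b)) +
      (\<Sum>k\<le>n. of_nat (n choose k) * (dk k a * dk (Suc (n - k)) b))"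
    by (simp add: dsum dmult dadd sum.distrib distrib_left mult.assoc)
  also have "(\<Sum>k\<le>n. of_nat (n choose k) * (dk k a * dk (Suc (n - k)) b))
      = (\<Sum>k\<le>n. of_nat (n choose k) * f k)"
    by (rule sum.cong) (auto simp: f_def Suc_diff_le)
  also have "(\<Sum>k\<le>n. of_nat (n choose k) * f k) = (\<Sum>k\<le>Suc n. of_nat (n choose k) * f k)"
    by simp
  also have "\<dots> = f 0 + (\<Sum>k\<le>n. of_nat (n choose Suc k) * f (Suc k))"
    by (subst sum.atMost_Suc_shift) simp
  also have "(\<Sum>k\<le>n. of_nat (n choose k) * (dk (Suc k) a * dk (n-k) b))
     = (\<Sum>k\<le>n. of_nat (n choose k) * f (Suc k))"
    by (rule sum.cong) (auto simp: f_def)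
  finally have 1: "dk (Suc n) (a * b) = (\<Sum>k\<le>n. of_nat (n choose k) * f (Suc k)) +
      (f 0 + (\<Sum>k\<le>n. of_nat (n choose Suc k) * f (Suc k)))" .
  have "(\<Sum>k\<le>Suc n. of_nat (Suc n choose k) * dk k a * dk (Suc n - k) b)
      = (\<Sum>k\<le>Suc n. of_nat (Suc n choose k) * f k)"
    by (rule sum.cong) (auto simp: f_def)
  also have "\<dots> = f 0 + (\<Sum>k\<le>n. of_nat (Suc n choose Suc k) * f (Suc k))"
    by (subst sum.atMost_Suc_shift) simp
  also have "\<dots> = f 0 + (\<Sum>k\<le>n. of_nat (n choose k) * f (Suc k)) +
      (\<Sum>k\<le>n. of_nat (n choose Suc k) * f (Suc k))"
    by (simp add: sum.distrib distrib_right)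
  finally have 2: "(\<Sum>k\<le>Suc n. of_nat (Suc n choose k) * dk k a * dk (Suc n - k) b) =
     f 0 + (\<Sum>k\<le>n. of_nat (n choose k) * f (Suc k)) +
     (\<Sum>k\<le>n. of_nat (n choose Suc k) * f (Suc k))" .
  show ?case unfolding 1 2 by (simp only: ac_simps)
qed

end

lemma diff_field_dfld: "diff_field der \<Longrightarrow> dfld der"
  unfolding diff_field_def dfld_def by blast


context dfld begin

abbreviation pm :: "'a pdo \<Rightarrow> 'a pdo \<Rightarrow> 'a pdo" where "pm \<equiv> pmult der"

definition bnd :: "'a pdo \<Rightarrow> int \<Rightarrow> bool" where
  "bnd P N \<longleftrightarrow> (\<forall>n>N. P n = 0)"

lemma bnd_zero: "bnd P N \<Longrightarrow> n > N \<Longrightarrow> P n = 0"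
  by (simp add: bnd_def)

lemma is_pdo_bnd: "is_pdo P \<longleftrightarrow> (\<exists>N. bnd P N)"
  by (simp add: is_pdo_def bnd_def)

lemma dprod: "(\<And>i. i \<in> S \<Longrightarrow> der (f i) = 0) \<Longrightarrow> der (prod f S) = 0"
  by (induction S rule: infinite_finite_induct) (auto simp: dmult)

lemma dinv_const: "der c = 0 \<Longrightarrow> der (inverse c) = 0"
  by (cases "c = 0") (auto simp: dinverse)

lemma dgchoose[simp]: "der (of_int m gchoose k) = 0"
proof -
  have "der (\<Prod>i=0..<k. (of_int m :: 'a) - of_nat i) = 0"
    by (rule dprod) (simp add: ddiff)
  moreover have "der (fact k :: 'a) = 0"
    by (metis dof_nat of_nat_fact)
  ultimately show ?thesis
    by (simp add: gbinomial_prod_rev divide_inverse dmult dinv_const)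
qed

lemma pmult_box:
  assumes "bnd P NP" "bnd Q NQ" "finite M" "finite K"
    "{j - NQ..NP} \<subseteq> M" "{0..nat (NP + NQ - j)} \<subseteq> K"
  shows "pm P Q j = (\<Sum>m\<in>M. \<Sum>k\<in>K. (of_int m gchoose k) * P m * dk k (Q (j + int k - m)))"
proof -
  let ?S = "{(m, k::nat). P m \<noteq> 0 \<and> Q (j + int k - m) \<noteq> 0}"
  let ?t = "\<lambda>(m, k). (of_int m gchoose k) * P m * dk k (Q (j + int k - m))"
  have sub: "?S \<subseteq> M \<times> K"
  proof
    fix x assume "x \<in> ?S"
    then obtain m k where x: "x = (m, k)" "P m \<noteq> 0" "Q (j + int k - m) \<noteq> 0" by auto
    have "m \<le> NP" by (metis assms(1) bnd_zero not_le x(2))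
    moreover have "j + int k - m \<le> NQ" by (metis assms(2) bnd_zero not_le x(3))
    ultimately have "m \<in> {j - NQ..NP}" "k \<in> {0..nat (NP + NQ - j)}" by auto
    thus "x \<in> M \<times> K" using x assms(5,6) by auto
  qed
  have "pm P Q j = sum ?t ?S"
    by (simp add: pmult_def)
  also have "\<dots> = sum ?t (M \<times> K)"
    by (rule sum.mono_neutral_left) (use sub assms(3,4) in auto)
  also have "\<dots> = (\<Sum>m\<in>M. \<Sum>k\<in>K. (of_int m gchoose k) * P m * dk k (Q (j + int k - m)))"
    by (simp add: sum.cartesian_product)
  finally show ?thesis .
qed

lemma bnd_pmult:
  assumes "bnd P NP" "bnd Q NQ"
  shows "bnd (pm P Q) (NP + NQ)"
  unfolding bnd_def
proof (intro allI impI)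
  fix j assume j: "j > NP + NQ"
  have "pm P Q j = (\<Sum>m\<in>{}. \<Sum>k\<in>{0..nat (NP + NQ - j)}. (of_int m gchoose k) * P m * dk k (Q (j + int k - m)))"
    by (rule pmult_box[OF assms]) (use j in auto)
  thus "pm P Q j = 0" by simp
qed

end

lemma regroup:
  fixes F5 :: "int \<times> nat \<times> int \<times> nat \<times> nat \<Rightarrow> 'a::comm_monoid_add"
    and F4 :: "int \<times> nat \<times> int \<times> nat \<Rightarrow> 'a"
  assumes fin: "finite B5" "finite B4"
    and s5: "\<And>x. F5 x \<noteq> 0 \<Longrightarrow> x \<in> B5"
    and s4: "\<And>y. F4 y \<noteq> 0 \<Longrightarrow> y \<in> B4"
    and tri: "\<And>m t n s u. F5 (m,t,n,s,u) \<noteq> 0 \<Longrightarrow> u \<le> t"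
    and fib: "\<And>l k2 m k1. (\<Sum>v\<le>k2. F5 (m, k1+v, l + int k1 - m, k2 - v, k1)) = F4 (l,k2,m,k1)"
  shows "sum F5 B5 = sum F4 B4"
proof -
  define \<phi> :: "int \<times> nat \<times> int \<times> nat \<times> nat \<Rightarrow> int \<times> nat \<times> int \<times> nat"
    where "\<phi> = (\<lambda>(m,t,n,s,u). (n + m - int u, t - u + s, m, u))"
  define T where "T = \<phi> ` B5 \<union> B4"
  have finT: "finite T" using fin by (simp add: T_def)
  have "sum F5 B5 = (\<Sum>y\<in>T. sum F5 {x. x \<in> B5 \<and> \<phi> x = y})"
    by (rule sum.group[symmetric]) (use fin finT in \<open>auto simp: T_def\<close>)
  also have "\<dots> = (\<Sum>y\<in>T. F4 y)"
  proof (rule sum.cong[OF refl])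
    fix y assume "y \<in> T"
    obtain l k2 m k1 where y: "y = (l, k2, m, k1)" by (cases y) auto
    define g where "g = (\<lambda>v. (m, k1+v, l + int k1 - m, k2 - v, k1))"
    define X where "X = g ` {..k2}"
    have gin: "\<phi> (g v) = y" if "v \<le> k2" for v
      using that by (simp add: \<phi>_def g_def y)
    have "sum F5 {x. x \<in> B5 \<and> \<phi> x = y} = sum F5 ({x. x \<in> B5 \<and> \<phi> x = y} \<inter> X)"
    proof (rule sum.mono_neutral_right)
      show "finite {x. x \<in> B5 \<and> \<phi> x = y}" using fin by auto
      show "{x. x \<in> B5 \<and> \<phi> x = y} \<inter> X \<subseteq> {x. x \<in> B5 \<and> \<phi> x = y}" by auto
      show "\<forall>i\<in>{x. x \<in> B5 \<and> \<phi> x = y} - {x. x \<in> B5 \<and> \<phi> x = y} \<inter> X. F5 i = 0"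
      proof (rule ballI, rule ccontr)
        fix x assume x: "x \<in> {x. x \<in> B5 \<and> \<phi> x = y} - {x. x \<in> B5 \<and> \<phi> x = y} \<inter> X"
          and nz: "F5 x \<noteq> 0"
        obtain m' t n s u where xx: "x = (m', t, n, s, u)" by (cases x) auto
        have ut: "u \<le> t" using tri nz xx by blast
        have eq: "(n + m' - int u, t - u + s, m', u) = (l, k2, m, k1)"
          using x xx y by (auto simp: \<phi>_def)
        have "x = g (t - k1)" using eq ut by (auto simp: g_def xx)
        moreover have "t - k1 \<le> k2" using eq ut by auto
        ultimately have "x \<in> X" by (auto simp: X_def)
        thus False using x by auto
      qed
    qed
    also have "\<dots> = sum F5 X"
    proof (rule sum.mono_neutral_left)
      show "finite X" by (simp add: X_def)
      show "{x. x \<in> B5 \<and> \<phi> x = y} \<inter> X \<subseteq> X" by auto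
      show "\<forall>i\<in>X - {x. x \<in> B5 \<and> \<phi> x = y} \<inter> X. F5 i = 0"
      proof
        fix x assume x: "x \<in> X - {x. x \<in> B5 \<and> \<phi> x = y} \<inter> X"
        then obtain v where v: "v \<le> k2" "x = g v" by (auto simp: X_def)
        hence "\<phi> x = y" using gin by simp
        hence "x \<notin> B5" using x by auto
        thus "F5 x = 0" using s5 by blast
      qed
    qed
    also have "\<dots> = (\<Sum>v\<le>k2. F5 (g v))"
      unfolding X_def by (rule sum.reindex_cong[OF _ refl refl]) (auto simp: inj_on_def g_def)
    also have "\<dots> = F4 y" using fib by (simp add: g_def y)
    finally show "sum F5 {x. x \<in> B5 \<and> \<phi> x = y} = F4 y" .
  qed
  also have "\<dots> = sum F4 B4"
  proof (rule sum.mono_neutral_right[OF finT])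
    show "B4 \<subseteq> T" by (auto simp: T_def)
    show "\<forall>i\<in>T - B4. F4 i = 0" using s4 by blast
  qed
  finally show ?thesis .
qed

context dfld begin

lemma dk_nz: "dk k x \<noteq> 0 \<Longrightarrow> x \<noteq> 0"
  by auto

lemma pmult_assoc:
  assumes P: "bnd P NP" and Q: "bnd Q NQ" and R: "bnd R NR"
  shows "pm (pm P Q) R j = pm P (pm Q R) j"
proof -
  define C where "C = \<bar>NP\<bar> + \<bar>NQ\<bar> + \<bar>NR\<bar> + \<bar>j\<bar>"
  have ab: "NP \<le> \<bar>NP\<bar>" "-\<bar>NP\<bar> \<le> NP" "NQ \<le> \<bar>NQ\<bar>" "-\<bar>NQ\<bar> \<le> NQ"
    "NR \<le> \<bar>NR\<bar>" "-\<bar>NR\<bar> \<le> NR" "j \<le> \<bar>j\<bar>" "-\<bar>j\<bar> \<le> j" by auto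
  define I1 where "I1 = {-C..C}"
  define K1 where "K1 = {0..nat C}"
  define I2 where "I2 = {-4*C..4*C}"
  define K2 where "K2 = {0..nat (4*C)}"
  define gc :: "int \<Rightarrow> nat \<Rightarrow> 'a" where "gc m k = (of_int m gchoose k)" for m k
  define F4 :: "int \<times> nat \<times> int \<times> nat \<Rightarrow> 'a" where
    "F4 = (\<lambda>(l,k2,m,k1). gc l k2 * (gc m k1 * P m * dk k1 (Q (l + int k1 - m))) * dk k2 (R (j + int k2 - l)))"
  define F5 :: "int \<times> nat \<times> int \<times> nat \<times> nat \<Rightarrow> 'a" where
    "F5 = (\<lambda>(m,t,n,s,u). if u \<le> t then gc m t * P m * (gc n s * (of_nat (t choose u) * dk u (Q n)
        * dk (t - u + s) (R (j + int t - m + int s - n)))) else 0)"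
  have fins: "finite I1" "finite K1" "finite I2" "finite K2"
    by (auto simp: I1_def I2_def K1_def K2_def)
  have "pm (pm P Q) R j = (\<Sum>l\<in>I1. \<Sum>k2\<in>K1. gc l k2 * pm P Q l * dk k2 (R (j + int k2 - l)))"
    unfolding gc_def
    by (rule pmult_box[OF bnd_pmult[OF P Q] R fins(1,2)]) (use ab in \<open>auto intro!: nat_mono simp: I1_def K1_def C_def\<close>)
  also have "\<dots> = (\<Sum>l\<in>I1. \<Sum>k2\<in>K1. \<Sum>m\<in>I2. \<Sum>k1\<in>K2. F4 (l,k2,m,k1))"
  proof (intro sum.cong refl)
    fix l k2 assume l: "l \<in> I1" and "k2 \<in> K1"
    have "pm P Q l = (\<Sum>m\<in>I2. \<Sum>k1\<in>K2. gc m k1 * P m * dk k1 (Q (l + int k1 - m)))"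
      unfolding gc_def
      by (rule pmult_box[OF P Q fins(3,4)]) (use ab l in \<open>auto intro!: nat_mono simp: I1_def I2_def K2_def C_def\<close>)
    thus "gc l k2 * pm P Q l * dk k2 (R (j + int k2 - l)) = (\<Sum>m\<in>I2. \<Sum>k1\<in>K2. F4 (l,k2,m,k1))"
      by (simp add: F4_def sum_distrib_left sum_distrib_right)
  qed
  also have "\<dots> = sum F4 (I1 \<times> K1 \<times> I2 \<times> K2)"
    by (simp add: sum.cartesian_product split_def)
  finally have LHS: "pm (pm P Q) R j = sum F4 (I1 \<times> K1 \<times> I2 \<times> K2)" .
  have "pm P (pm Q R) j = (\<Sum>m\<in>I1. \<Sum>t\<in>K1. gc m t * P m * dk t (pm Q R (j + int t - m)))"
    unfolding gc_def
    by (rule pmult_box[OF P bnd_pmult[OF Q R] fins(1,2)]) (use ab in \<open>auto intro!: nat_mono simp: I1_def K1_def C_def\<close>)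
  also have "\<dots> = (\<Sum>m\<in>I1. \<Sum>t\<in>K1. \<Sum>n\<in>I2. \<Sum>s\<in>K2. \<Sum>u\<in>K1. F5 (m,t,n,s,u))"
  proof (intro sum.cong refl)
    fix m t assume m: "m \<in> I1" and t: "t \<in> K1"
    have "pm Q R (j + int t - m) = (\<Sum>n\<in>I2. \<Sum>s\<in>K2. gc n s * Q n * dk s (R (j + int t - m + int s - n)))"
      unfolding gc_def
      by (rule pmult_box[OF Q R fins(3,4)]) (use ab m t in \<open>auto intro!: nat_mono simp: I1_def K1_def I2_def K2_def C_def\<close>)
    hence "dk t (pm Q R (j + int t - m)) =
        (\<Sum>n\<in>I2. \<Sum>s\<in>K2. gc n s * dk t (Q n * dk s (R (j + int t - m + int s - n))))"
      by (simp add: dk_sum dk_const_mult gc_def mult.assoc)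
    also have "\<dots> = (\<Sum>n\<in>I2. \<Sum>s\<in>K2. gc n s * (\<Sum>u\<le>t. of_nat (t choose u) * dk u (Q n)
        * dk (t - u + s) (R (j + int t - m + int s - n))))"
    proof (intro sum.cong refl arg_cong2[where f = "(*)"])
      fix n s
      show "dk t (Q n * dk s (R (j + int t - m + int s - n))) = (\<Sum>u\<le>t. of_nat (t choose u) * dk u (Q n)
        * dk (t - u + s) (R (j + int t - m + int s - n)))"
        unfolding leibniz by (rule sum.cong[OF refl]) (simp only: dk_add_nat)
    qed
    also have "\<dots> = (\<Sum>n\<in>I2. \<Sum>s\<in>K2. gc n s * (\<Sum>u\<in>K1. if u \<le> t then of_nat (t choose u) * dk u (Q n)
        * dk (t - u + s) (R (j + int t - m + int s - n)) else 0))"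
    proof (intro sum.cong[OF refl] arg_cong2[where f = "(*)"] refl)
      fix n s
      have "{..t} = {u \<in> K1. u \<le> t}" using t by (auto simp: K1_def)
      thus "(\<Sum>u\<le>t. of_nat (t choose u) * dk u (Q n) * dk (t - u + s) (R (j + int t - m + int s - n))) =
        (\<Sum>u\<in>K1. if u \<le> t then of_nat (t choose u) * dk u (Q n)
        * dk (t - u + s) (R (j + int t - m + int s - n)) else 0)"
        by (simp add: sum.inter_filter[symmetric] fins)
    qed
    finally show "gc m t * P m * dk t (pm Q R (j + int t - m)) = (\<Sum>n\<in>I2. \<Sum>s\<in>K2. \<Sum>u\<in>K1. F5 (m,t,n,s,u))"
      by (simp add: F5_def sum_distrib_left if_distrib cong: if_cong)
  qed
  also have "\<dots> = sum F5 (I1 \<times> K1 \<times> I2 \<times> K2 \<times> K1)"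
    by (simp add: sum.cartesian_product split_def)
  finally have RHS: "pm P (pm Q R) j = sum F5 (I1 \<times> K1 \<times> I2 \<times> K2 \<times> K1)" .
  have "sum F5 (I1 \<times> K1 \<times> I2 \<times> K2 \<times> K1) = sum F4 (I1 \<times> K1 \<times> I2 \<times> K2)"
  proof (rule regroup)
    show "finite (I1 \<times> K1 \<times> I2 \<times> K2 \<times> K1)" "finite (I1 \<times> K1 \<times> I2 \<times> K2)" using fins by auto
    show "u \<le> t" if "F5 (m,t,n,s,u) \<noteq> 0" for m t n s u
      using that by (auto simp: F5_def split: if_splits)
    show "x \<in> I1 \<times> K1 \<times> I2 \<times> K2 \<times> K1" if "F5 x \<noteq> 0" for x
    proof -
      obtain m t n s u where x: "x = (m,t,n,s,u)" by (cases x) auto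
      have nz: "u \<le> t" "P m \<noteq> 0" "Q n \<noteq> 0" "R (j + int t - m + int s - n) \<noteq> 0"
        using that by (auto simp: F5_def x split: if_splits)
      have "m \<le> NP" by (metis P bnd_zero not_le nz(2))
      moreover have "n \<le> NQ" by (metis Q bnd_zero not_le nz(3))
      moreover have "j + int t - m + int s - n \<le> NR" by (metis R bnd_zero not_le nz(4))
      ultimately show ?thesis using nz(1) ab
        by (auto simp: x I1_def K1_def I2_def K2_def C_def le_nat_iff)
    qed
    show "y \<in> I1 \<times> K1 \<times> I2 \<times> K2" if "F4 y \<noteq> 0" for y
    proof -
      obtain l k2 m k1 where y: "y = (l,k2,m,k1)" by (cases y) auto
      have nz: "P m \<noteq> 0" "Q (l + int k1 - m) \<noteq> 0" "R (j + int k2 - l) \<noteq> 0"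
        using that by (auto simp: F4_def y)
      have "m \<le> NP" by (metis P bnd_zero not_le nz(1))
      moreover have "l + int k1 - m \<le> NQ" by (metis Q bnd_zero not_le nz(2))
      moreover have "j + int k2 - l \<le> NR" by (metis R bnd_zero not_le nz(3))
      ultimately show ?thesis using ab
        by (auto simp: y I1_def K1_def I2_def K2_def C_def le_nat_iff)
    qed
    show "(\<Sum>v\<le>k2. F5 (m, k1+v, l + int k1 - m, k2 - v, k1)) = F4 (l,k2,m,k1)" for l k2 m k1
    proof -
      define X where "X = P m * dk k1 (Q (l + int k1 - m)) * dk k2 (R (j + int k2 - l))"
      have "(\<Sum>v\<le>k2. F5 (m, k1+v, l + int k1 - m, k2 - v, k1))
          = (\<Sum>v\<le>k2. (gc m (k1+v) * of_nat ((k1+v) choose k1) * gc (l + int k1 - m) (k2 - v)) * X)"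
      proof (rule sum.cong[OF refl])
        fix v assume v: "v \<in> {..k2}"
        have e1: "k1 + v - k1 + (k2 - v) = k2" using v by auto
        have e2: "j + int (k1 + v) - m + int (k2 - v) - (l + int k1 - m) = j + int k2 - l" using v by auto
        show "F5 (m, k1+v, l + int k1 - m, k2 - v, k1) =
            (gc m (k1+v) * of_nat ((k1+v) choose k1) * gc (l + int k1 - m) (k2 - v)) * X"
          using v by (simp add: F5_def e1 e2 X_def mult_ac of_nat_diff add_diff_eq)
      qed
      also have "\<dots> = (\<Sum>v\<le>k2. (gc m k1 * ((of_int m - of_nat k1) gchoose v) * gc (l + int k1 - m) (k2 - v)) * X)"
      proof (rule sum.cong[OF refl])
        fix v
        have "gc m (k1+v) * of_nat ((k1+v) choose k1) = gc m k1 * ((of_int m - of_nat k1) gchoose v)"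
          unfolding gc_def binomial_gbinomial
          using gbinomial_trinomial_revision[of k1 "k1+v" "of_int m :: 'a"] by simp
        thus "(gc m (k1+v) * of_nat ((k1+v) choose k1) * gc (l + int k1 - m) (k2 - v)) * X =
          (gc m k1 * ((of_int m - of_nat k1) gchoose v) * gc (l + int k1 - m) (k2 - v)) * X" by simp
      qed
      also have "\<dots> = gc m k1 * (\<Sum>v\<le>k2. ((of_int m - of_nat k1) gchoose v) * gc (l + int k1 - m) (k2 - v)) * X"
        by (simp add: sum_distrib_left sum_distrib_right mult_ac)
      also have "(\<Sum>v\<le>k2. ((of_int m - of_nat k1) gchoose v) * gc (l + int k1 - m) (k2 - v)) = gc l k2"
      proof -
        have "(\<Sum>v\<le>k2. ((of_int m - of_nat k1) gchoose v) * gc (l + int k1 - m) (k2 - v))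
           = ((of_int m - of_nat k1) + of_int (l + int k1 - m) :: 'a) gchoose k2"
          unfolding gc_def atMost_atLeast0 by (rule gbinomial_Vandermonde)
        thus ?thesis by (simp add: gc_def)
      qed
      finally show ?thesis by (simp add: F4_def X_def mult_ac)
    qed
  qed
  thus ?thesis using LHS RHS by simp
qed

end


lemma gc_int_nat: "m \<ge> 0 \<Longrightarrow> (of_int m gchoose k :: 'a::field_char_0) = of_nat (nat m choose k)"
  by (metis binomial_gbinomial int_nat_eq of_int_of_nat_eq)

lemma gc_big: "m \<ge> 0 \<Longrightarrow> int k > m \<Longrightarrow> (of_int m gchoose k :: 'a::field_char_0) = 0"
  by (simp add: gc_int_nat)

lemma gc_self: "m \<ge> 0 \<Longrightarrow> (of_int m gchoose nat m :: 'a::field_char_0) = 1"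
  by (simp add: gc_int_nat)

lemma gc_zero: "(of_int 0 gchoose k :: 'a::field_char_0) = (if k = 0 then 1 else 0)"
  by (simp add: gbinomial_0_left)

lemma gc_one: "(of_int 1 gchoose k :: 'a::field_char_0) = (if k \<le> 1 then 1 else 0)"
proof (cases k)
  case 0 then show ?thesis by simp
next
  case (Suc k') then show ?thesis
    using gbinomial_Suc_Suc[of "0::'a" k'] by (simp add: gbinomial_0_left)
qed

lemma gc_mone: "(of_int (-1) gchoose k :: 'a::field_char_0) = (-1) ^ k"
  using gbinomial_minus[of "1::'a" k] by (simp add: binomial_gbinomial[symmetric])

context dfld begin

definition cst :: "'a \<Rightarrow> 'a pdo" where "cst a = (\<lambda>j. if j = 0 then a else 0)"
definition Dop :: "'a pdo" where "Dop = (\<lambda>j. if j = 1 then 1 else 0)"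
definition Dinv :: "'a pdo" where "Dinv = (\<lambda>j. if j = -1 then 1 else 0)"

lemma pmult_sub:
  assumes "finite M" "finite K"
    "\<And>m k. P m \<noteq> 0 \<Longrightarrow> Q (j + int k - m) \<noteq> 0 \<Longrightarrow> m \<in> M \<and> k \<in> K"
  shows "pm P Q j = (\<Sum>m\<in>M. \<Sum>k\<in>K. (of_int m gchoose k) * P m * dk k (Q (j + int k - m)))"
proof -
  let ?S = "{(m, k::nat). P m \<noteq> 0 \<and> Q (j + int k - m) \<noteq> 0}"
  let ?t = "\<lambda>(m, k). (of_int m gchoose k) * P m * dk k (Q (j + int k - m))"
  have sub: "?S \<subseteq> M \<times> K" using assms(3) by auto
  have "pm P Q j = sum ?t ?S"
    by (simp add: pmult_def)
  also have "\<dots> = sum ?t (M \<times> K)"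
    by (rule sum.mono_neutral_left) (use sub assms(1,2) in auto)
  also have "\<dots> = (\<Sum>m\<in>M. \<Sum>k\<in>K. (of_int m gchoose k) * P m * dk k (Q (j + int k - m)))"
    by (simp add: sum.cartesian_product)
  finally show ?thesis .
qed

lemma bnd_mono: "bnd P N \<Longrightarrow> N \<le> M \<Longrightarrow> bnd P M"
  by (simp add: bnd_def)

lemma bnd_add: "bnd P N \<Longrightarrow> bnd Q N \<Longrightarrow> bnd (\<lambda>j. P j + Q j) N"
  by (simp add: bnd_def)

lemma bnd_diff: "bnd P N \<Longrightarrow> bnd Q N \<Longrightarrow> bnd (\<lambda>j. P j - Q j) N"
  by (simp add: bnd_def)

lemma bnd_uminus: "bnd P N \<Longrightarrow> bnd (\<lambda>j. - P j) N"
  by (simp add: bnd_def)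

lemma bnd_sum: "(\<And>i. i \<in> S \<Longrightarrow> bnd (f i) N) \<Longrightarrow> bnd (\<lambda>j. \<Sum>i\<in>S. f i j) N"
  by (simp add: bnd_def)

lemma bnd_smult: "bnd P N \<Longrightarrow> bnd (\<lambda>j. a * P j) N"
  by (simp add: bnd_def)

lemma bnd_cst: "bnd (cst a) 0" by (simp add: bnd_def cst_def)
lemma bnd_Dop: "bnd Dop 1" by (simp add: bnd_def Dop_def)
lemma bnd_Dinv: "bnd Dinv (-1)" by (simp add: bnd_def Dinv_def)
lemma bnd_zero_op: "bnd (\<lambda>_. 0) N" by (simp add: bnd_def)

lemma pdo_bnd_common: "is_pdo P \<Longrightarrow> is_pdo Q \<Longrightarrow> \<exists>N. bnd P N \<and> bnd Q N"
  by (metis bnd_mono is_pdo_bnd max.cobounded1 max.cobounded2)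

lemma pm_add_left:
  assumes "bnd P N" "bnd Q N" "bnd R M"
  shows "pm (\<lambda>j. P j + Q j) R = (\<lambda>j. pm P R j + pm Q R j)"
proof
  fix j
  have b: "bnd (\<lambda>j. P j + Q j) N" using assms bnd_add by blast
  show "pm (\<lambda>j. P j + Q j) R j = pm P R j + pm Q R j"
    using pmult_box[OF b assms(3), of "{j - M..N}" "{0..nat (N + M - j)}" j]
      pmult_box[OF assms(1,3), of "{j - M..N}" "{0..nat (N + M - j)}" j]
      pmult_box[OF assms(2,3), of "{j - M..N}" "{0..nat (N + M - j)}" j]
    by (simp add: distrib_left distrib_right sum.distrib)
qed

lemma pm_add_right:
  assumes "bnd P N" "bnd Q M" "bnd R M"
  shows "pm P (\<lambda>j. Q j + R j) = (\<lambda>j. pm P Q j + pm P R j)"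
proof
  fix j
  have b: "bnd (\<lambda>j. Q j + R j) M" using assms bnd_add by blast
  show "pm P (\<lambda>j. Q j + R j) j = pm P Q j + pm P R j"
    using pmult_box[OF assms(1) b, of "{j - M..N}" "{0..nat (N + M - j)}" j]
      pmult_box[OF assms(1,2), of "{j - M..N}" "{0..nat (N + M - j)}" j]
      pmult_box[OF assms(1,3), of "{j - M..N}" "{0..nat (N + M - j)}" j]
    by (simp add: distrib_left distrib_right sum.distrib dk_add)
qed

lemma pm_smult_left:
  assumes "bnd P N" "bnd R M"
  shows "pm (\<lambda>j. a * P j) R = (\<lambda>j. a * pm P R j)"
proof
  fix j
  have b: "bnd (\<lambda>j. a * P j) N" using assms bnd_smult by blast
  show "pm (\<lambda>j. a * P j) R j = a * pm P R j"
    using pmult_box[OF b assms(2), of "{j - M..N}" "{0..nat (N + M - j)}" j]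
      pmult_box[OF assms(1,2), of "{j - M..N}" "{0..nat (N + M - j)}" j]
    by (simp add: sum_distrib_left mult_ac)
qed

lemma pm_smult_right:
  assumes "bnd P N" "bnd R M" "der c = 0"
  shows "pm P (\<lambda>j. c * R j) = (\<lambda>j. c * pm P R j)"
proof
  fix j
  have b: "bnd (\<lambda>j. c * R j) M" using assms bnd_smult by blast
  show "pm P (\<lambda>j. c * R j) j = c * pm P R j"
    using pmult_box[OF assms(1) b, of "{j - M..N}" "{0..nat (N + M - j)}" j]
      pmult_box[OF assms(1,2), of "{j - M..N}" "{0..nat (N + M - j)}" j]
    by (simp add: sum_distrib_left mult_ac dk_const_mult[OF assms(3)])
qed

lemma pm_zero_left[simp]: "pm (\<lambda>_. 0) R = (\<lambda>_. 0)"
  by (rule ext) (simp add: pmult_def)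

lemma pm_zero_right[simp]: "pm P (\<lambda>_. 0) = (\<lambda>_. 0)"
  by (rule ext) (simp add: pmult_def)

lemma pm_uminus_left:
  assumes "bnd P N" "bnd R M"
  shows "pm (\<lambda>j. - P j) R = (\<lambda>j. - pm P R j)"
  using pm_smult_left[OF assms, of "-1"] by (simp add: fun_eq_iff)

lemma pm_uminus_right:
  assumes "bnd P N" "bnd R M"
  shows "pm P (\<lambda>j. - R j) = (\<lambda>j. - pm P R j)"
  using pm_smult_right[OF assms, of "-1"] by (simp add: fun_eq_iff)

lemma pm_diff_left:
  assumes "bnd P N" "bnd Q N" "bnd R M"
  shows "pm (\<lambda>j. P j - Q j) R = (\<lambda>j. pm P R j - pm Q R j)"
  using pm_add_left[OF assms(1) bnd_uminus[OF assms(2)] assms(3)] pm_uminus_left[OF assms(2,3)]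
  by (simp add: fun_eq_iff)

lemma pm_diff_right:
  assumes "bnd P N" "bnd Q M" "bnd R M"
  shows "pm P (\<lambda>j. Q j - R j) = (\<lambda>j. pm P Q j - pm P R j)"
  using pm_add_right[OF assms(1,2) bnd_uminus[OF assms(3)]] pm_uminus_right[OF assms(1,3)]
  by (simp add: fun_eq_iff)

lemma pm_sum_left:
  assumes "\<And>i. i \<in> S \<Longrightarrow> bnd (f i) N" "bnd R M"
  shows "pm (\<lambda>j. \<Sum>i\<in>S. f i j) R = (\<lambda>j. \<Sum>i\<in>S. pm (f i) R j)"
  using assms(1)
proof (induction S rule: infinite_finite_induct)
  case (insert x F)
  have "pm (\<lambda>j. \<Sum>i\<in>insert x F. f i j) R = pm (\<lambda>j. f x j + (\<Sum>i\<in>F. f i j)) R" using insert by simp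
  also have "\<dots> = (\<lambda>j. pm (f x) R j + pm (\<lambda>j. \<Sum>i\<in>F. f i j) R j)"
    by (rule pm_add_left[OF _ bnd_sum assms(2)]) (use insert in auto)
  finally show ?case using insert by simp
qed auto

lemma pm_sum_right:
  assumes "\<And>i. i \<in> S \<Longrightarrow> bnd (f i) M" "bnd P N"
  shows "pm P (\<lambda>j. \<Sum>i\<in>S. f i j) = (\<lambda>j. \<Sum>i\<in>S. pm P (f i) j)"
  using assms(1)
proof (induction S rule: infinite_finite_induct)
  case (insert x F)
  have "pm P (\<lambda>j. \<Sum>i\<in>insert x F. f i j) = pm P (\<lambda>j. f x j + (\<Sum>i\<in>F. f i j))" using insert by simp
  also have "\<dots> = (\<lambda>j. pm P (f x) j + pm P (\<lambda>j. \<Sum>i\<in>F. f i j) j)"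
    by (rule pm_add_right[OF assms(2) _ bnd_sum]) (use insert in auto)
  finally show ?case using insert by simp
qed auto

lemma pm_assoc:
  assumes "bnd P NP" "bnd Q NQ" "bnd R NR"
  shows "pm (pm P Q) R = pm P (pm Q R)"
  using pmult_assoc[OF assms] by (rule ext)

end

context dfld begin

lemma pmult_sub2:
  assumes "is_pdo P" "is_pdo Q" "finite M" "finite K"
    "\<And>m k. (of_int m gchoose k) * P m * dk k (Q (j + int k - m)) \<noteq> 0 \<Longrightarrow> m \<in> M \<and> k \<in> K"
  shows "pm P Q j = (\<Sum>m\<in>M. \<Sum>k\<in>K. (of_int m gchoose k) * P m * dk k (Q (j + int k - m)))"
proof -
  obtain NP NQ where b: "bnd P NP" "bnd Q NQ" using assms(1,2) is_pdo_bnd by blast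
  let ?M = "{j - NQ..NP} \<union> M" and ?K = "{0..nat (NP + NQ - j)} \<union> K"
  let ?t = "\<lambda>m k. (of_int m gchoose k) * P m * dk k (Q (j + int k - m))"
  have "pm P Q j = (\<Sum>m\<in>?M. \<Sum>k\<in>?K. ?t m k)"
    by (rule pmult_box[OF b]) (use assms in auto)
  also have "\<dots> = (\<Sum>(m,k)\<in>?M \<times> ?K. ?t m k)" by (simp add: sum.cartesian_product)
  also have "\<dots> = (\<Sum>(m,k)\<in>M \<times> K. ?t m k)"
    by (rule sum.mono_neutral_right) (use assms in auto)
  also have "\<dots> = (\<Sum>m\<in>M. \<Sum>k\<in>K. ?t m k)" by (simp add: sum.cartesian_product)
  finally show ?thesis .
qed

lemma pdo_mono[simp]: "is_pdo (\<lambda>j. if j = n then c else 0)"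
  unfolding is_pdo_def by (rule exI[of _ n]) auto

lemma gc0[simp]: "((0::'a) gchoose k) = (if k = 0 then 1 else 0)"
  by (simp add: gbinomial_0_left)

lemma gc1[simp]: "((1::'a) gchoose k) = (if k \<le> 1 then 1 else 0)"
  using gc_one[where 'a='a] by simp

lemma gcm1[simp]: "((-1::'a) gchoose k) = (-1) ^ k"
  using gc_mone[where 'a='a] by simp

lemma pdo_cst[simp]: "is_pdo (cst a)" using bnd_cst is_pdo_bnd by blast
lemma pdo_Dop[simp]: "is_pdo Dop" using bnd_Dop is_pdo_bnd by blast
lemma pdo_Dinv[simp]: "is_pdo Dinv" using bnd_Dinv is_pdo_bnd by blast

lemma pm_cst_left:
  assumes "is_pdo X"
  shows "pm (cst a) X = (\<lambda>j. a * X j)"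
proof
  fix j
  have "pm (cst a) X j = (\<Sum>m\<in>{0}. \<Sum>k\<in>{0}. (of_int m gchoose k) * cst a m * dk k (X (j + int k - m)))"
    by (rule pmult_sub2) (auto simp: assms cst_def split: if_splits)
  thus "pm (cst a) X j = a * X j" by (simp add: cst_def)
qed

lemma pm_mono_right:
  assumes "is_pdo X" "der c = 0"
  shows "pm X (\<lambda>i. if i = n then c else 0) = (\<lambda>j. X (j - n) * c)"
proof
  fix j
  have p: "is_pdo (\<lambda>i. if i = n then c else 0)"
    unfolding is_pdo_def by (rule exI[of _ n]) auto
  have "pm X (\<lambda>i. if i = n then c else 0) j = (\<Sum>m\<in>{j - n}. \<Sum>k\<in>{0}. (of_int m gchoose k) * X m
      * dk k ((\<lambda>i. if i = n then c else 0) (j + int k - m)))"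
    by (rule pmult_sub2[OF assms(1) p]) (auto simp: dk_const'[OF assms(2)] split: if_splits)
  thus "pm X (\<lambda>i. if i = n then c else 0) j = X (j - n) * c" by simp
qed

lemma pm_cst_right_const: "is_pdo X \<Longrightarrow> der c = 0 \<Longrightarrow> pm X (cst c) = (\<lambda>j. X j * c)"
  using pm_mono_right[of X c 0] by (simp add: cst_def)

lemma pm_one_right[simp]: "is_pdo X \<Longrightarrow> pm X (cst 1) = X"
  using pm_cst_right_const[of X 1] by simp

lemma pm_one_left[simp]: "is_pdo X \<Longrightarrow> pm (cst 1) X = X"
  using pm_cst_left[of X 1] by simp

lemma pm_Dop_right: "is_pdo X \<Longrightarrow> pm X Dop = (\<lambda>j. X (j - 1))"
  using pm_mono_right[of X 1 1] by (simp add: Dop_def)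

lemma pm_Dinv_right: "is_pdo X \<Longrightarrow> pm X Dinv = (\<lambda>j. X (j + 1))"
  using pm_mono_right[of X 1 "-1"] by (simp add: Dinv_def)

lemma pm_Dop_left:
  assumes "is_pdo X"
  shows "pm Dop X = (\<lambda>j. X (j - 1) + der (X j))"
proof
  fix j
  have "pm Dop X j = (\<Sum>m\<in>{1}. \<Sum>k\<in>{0,1}. (of_int m gchoose k) * Dop m * dk k (X (j + int k - m)))"
    by (rule pmult_sub2) (auto simp: assms Dop_def split: if_splits)
  thus "pm Dop X j = X (j - 1) + der (X j)" by (simp add: Dop_def)
qed

lemma pm_Dinv_left:
  assumes "is_pdo X" "bnd X N"
  shows "pm Dinv X j = (\<Sum>k\<in>{0..nat (N - j)}. (-1)^k * dk k (X (j + int k + 1)))"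
proof -
  have "pm Dinv X j = (\<Sum>m\<in>{-1}. \<Sum>k\<in>{0..nat (N - j)}. (of_int m gchoose k) * Dinv m * dk k (X (j + int k - m)))"
  proof (rule pmult_sub2)
    fix m k assume nz: "(of_int m gchoose k) * Dinv m * dk k (X (j + int k - m)) \<noteq> 0"
    hence "m = -1" by (auto simp: Dinv_def split: if_splits)
    moreover have "j + int k - m \<le> N" using nz bnd_zero[OF assms(2)] by (metis dk0 mult_zero_right not_le)
    ultimately show "m \<in> {-1} \<and> k \<in> {0..nat (N - j)}" by auto
  qed (auto simp: assms)
  thus ?thesis by (simp add: Dinv_def gc_mone)
qed

lemma pm_Dop_Dinv: "pm Dop Dinv = cst 1"
  unfolding pm_Dop_left[OF pdo_Dinv] by (auto simp: Dinv_def cst_def fun_eq_iff)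

lemma pm_Dinv_Dop: "pm Dinv Dop = cst 1"
  unfolding pm_Dop_right[OF pdo_Dinv] by (auto simp: Dinv_def cst_def fun_eq_iff)

lemma pm_cst_cst: "pm (cst a) (cst b) = cst (a * b)"
  unfolding pm_cst_left[OF pdo_cst] by (auto simp: cst_def fun_eq_iff)

lemma pm_Dinv_cst:
  "pm Dinv (cst q) j = (if j < 0 then (-1) ^ nat (- j - 1) * dk (nat (- j - 1)) q else 0)"
proof (cases "j < 0")
  case True
  have "pm Dinv (cst q) j = (\<Sum>m\<in>{-1}. \<Sum>k\<in>{nat (- j - 1)}. (of_int m gchoose k) * Dinv m * dk k (cst q (j + int k - m)))"
    by (rule pmult_sub2) (use True in \<open>auto simp: Dinv_def cst_def split: if_splits\<close>)
  then show ?thesis using True by (simp add: Dinv_def cst_def gc_mone)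
next
  case False
  have "pm Dinv (cst q) j = (\<Sum>m\<in>{}. \<Sum>k\<in>{}. (of_int m gchoose k) * Dinv m * dk k (cst q (j + int k - m)))"
    by (rule pmult_sub2) (use False in \<open>auto simp: Dinv_def cst_def split: if_splits\<close>)
  then show ?thesis using False by simp
qed

definition wn :: "'a \<Rightarrow> 'a \<Rightarrow> 'a pdo" where
  "wn p q = pm (cst p) (pm Dinv (cst q))"

lemma pdo_pm[simp]: "is_pdo P \<Longrightarrow> is_pdo Q \<Longrightarrow> is_pdo (pm P Q)"
  using bnd_pmult is_pdo_bnd by blast

lemma wn_eq: "wn p q = (\<lambda>j. if j < 0 then p * (-1) ^ nat (- j - 1) * dk (nat (- j - 1)) q else 0)"
  by (simp add: wn_def pm_cst_left pm_Dinv_cst fun_eq_iff)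

end

context dfld begin

lemma diffop_pdo: "is_diffop P \<Longrightarrow> is_pdo P" by (simp add: is_diffop_def)
lemma diffop_neg: "is_diffop P \<Longrightarrow> n < 0 \<Longrightarrow> P n = 0" by (simp add: is_diffop_def)

lemma diffop_cst[simp]: "is_diffop (cst a)" by (simp add: is_diffop_def cst_def)
lemma diffop_Dop[simp]: "is_diffop Dop" by (simp add: is_diffop_def Dop_def)
lemma diffop_zero[simp]: "is_diffop (\<lambda>_. 0::'a)" by (simp add: is_diffop_def is_pdo_def)

lemma pdo_add[simp]: "is_pdo (P::'a pdo) \<Longrightarrow> is_pdo Q \<Longrightarrow> is_pdo (\<lambda>j. P j + Q j)"
  using pdo_bnd_common[of P Q] bnd_add is_pdo_bnd by blast
lemma pdo_diff[simp]: "is_pdo (P::'a pdo) \<Longrightarrow> is_pdo Q \<Longrightarrow> is_pdo (\<lambda>j. P j - Q j)"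
  using pdo_bnd_common[of P Q] bnd_diff is_pdo_bnd by blast
lemma pdo_uminus[simp]: "is_pdo (P::'a pdo) \<Longrightarrow> is_pdo (\<lambda>j. - P j)"
  using bnd_uminus is_pdo_bnd by blast
lemma pdo_smult[simp]: "is_pdo (P::'a pdo) \<Longrightarrow> is_pdo (\<lambda>j. a * P j)"
  using bnd_smult is_pdo_bnd by blast
lemma pdo_zero[simp]: "is_pdo (\<lambda>_. 0::'a)" by (simp add: is_pdo_def)
lemma pdo_sum[simp]: "(\<And>i. i \<in> S \<Longrightarrow> is_pdo (f i :: 'a pdo)) \<Longrightarrow> is_pdo (\<lambda>j. \<Sum>i\<in>S. f i j)"
proof (induction S rule: infinite_finite_induct)
  case (insert x F)
  then show ?case using pdo_add[of "f x" "\<lambda>j. \<Sum>i\<in>F. f i j"] by simp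
qed auto

lemma diffop_add[simp]: "is_diffop (P::'a pdo) \<Longrightarrow> is_diffop Q \<Longrightarrow> is_diffop (\<lambda>j. P j + Q j)"
  by (simp add: is_diffop_def)
lemma diffop_diff[simp]: "is_diffop (P::'a pdo) \<Longrightarrow> is_diffop Q \<Longrightarrow> is_diffop (\<lambda>j. P j - Q j)"
  by (simp add: is_diffop_def)
lemma diffop_uminus[simp]: "is_diffop (P::'a pdo) \<Longrightarrow> is_diffop (\<lambda>j. - P j)"
  by (simp add: is_diffop_def)
lemma diffop_smult[simp]: "is_diffop (P::'a pdo) \<Longrightarrow> is_diffop (\<lambda>j. a * P j)"
  by (simp add: is_diffop_def)
lemma diffop_sum[simp]: "(\<And>i. i \<in> S \<Longrightarrow> is_diffop (f i :: 'a pdo)) \<Longrightarrow> is_diffop (\<lambda>j. \<Sum>i\<in>S. f i j)"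
  by (simp add: is_diffop_def)

lemma diffop_pm[simp]:
  assumes "is_diffop P" "is_diffop Q"
  shows "is_diffop (pm P Q)"
  unfolding is_diffop_def
proof (intro conjI allI impI)
  show "is_pdo (pm P Q)" using assms by (simp add: diffop_pdo)
  fix j :: int assume j: "j < 0"
  have "pm P Q j = (\<Sum>m\<in>{}. \<Sum>k\<in>{}. (of_int m gchoose k) * P m * dk k (Q (j + int k - m)))"
  proof (rule pmult_sub2)
    fix m k assume nz: "(of_int m gchoose k) * P m * dk k (Q (j + int k - m)) \<noteq> 0"
    have "m \<ge> 0" using nz assms(1) diffop_neg by (metis mult_zero_left mult_zero_right not_le)
    moreover have "j + int k - m \<ge> 0" using nz assms(2) diffop_neg by (metis dk0 mult_zero_right not_le)
    ultimately have "(of_int m gchoose k :: 'a) = 0" using j by (intro gc_big) auto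
    thus "m \<in> {} \<and> k \<in> {}" using nz by simp
  qed (use assms in \<open>auto simp: diffop_pdo\<close>)
  thus "pm P Q j = 0" by simp
qed

lemma apply_sub:
  assumes "finite S" "{n. X n \<noteq> 0} \<subseteq> S"
  shows "apply_op der X f = (\<Sum>n\<in>S. X n * dk (nat n) f)"
  unfolding apply_op_def by (rule sum.mono_neutral_left) (use assms in auto)

lemma diffop_supp: "is_diffop X \<Longrightarrow> bnd X N \<Longrightarrow> {n. X n \<noteq> 0} \<subseteq> {0..N}"
  by (auto simp: is_diffop_def bnd_def) (meson not_le)+

lemma apply_box: "is_diffop X \<Longrightarrow> bnd X N \<Longrightarrow> apply_op der X f = (\<Sum>n\<in>{0..N}. X n * dk (nat n) f)"
  by (rule apply_sub) (auto dest: diffop_supp)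

lemma apply_eq_pm:
  assumes X: "is_diffop X"
  shows "apply_op der X f = pm X (cst f) 0"
proof -
  obtain N where N: "bnd X N" using X is_diffop_def is_pdo_bnd by blast
  have "pm X (cst f) 0 = (\<Sum>m\<in>{0..N}. \<Sum>k\<in>{0..nat N}. (of_int m gchoose k) * X m * dk k (cst f (0 + int k - m)))"
  proof (rule pmult_sub2)
    fix m k assume nz: "(of_int m gchoose k) * X m * dk k (cst f (0 + int k - m)) \<noteq> 0"
    hence "X m \<noteq> 0" "int k = m" by (auto simp: cst_def split: if_splits)
    thus "m \<in> {0..N} \<and> k \<in> {0..nat N}" using diffop_supp[OF X N] by auto
  qed (use X in \<open>auto simp: diffop_pdo\<close>)
  also have "\<dots> = (\<Sum>m\<in>{0..N}. X m * dk (nat m) f)"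
  proof (rule sum.cong[OF refl])
    fix m assume m: "m \<in> {0..N}"
    have "(\<Sum>k\<in>{0..nat N}. (of_int m gchoose k) * X m * dk k (cst f (0 + int k - m)))
        = (\<Sum>k\<in>{0..nat N}. if k = nat m then (of_int m gchoose k) * X m * dk k f else 0)"
      by (rule sum.cong[OF refl]) (use m in \<open>auto simp: cst_def\<close>)
    also have "\<dots> = X m * dk (nat m) f" using m by (simp add: gc_self nat_mono)
    finally show "(\<Sum>k\<in>{0..nat N}. (of_int m gchoose k) * X m * dk k (cst f (0 + int k - m))) = X m * dk (nat m) f" .
  qed
  finally show ?thesis using apply_box[OF X N] by simp
qed

lemma pm_zero_at0:
  assumes P: "is_diffop P" and V: "is_pdo V" "\<And>n. n \<le> 0 \<Longrightarrow> V n = 0"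
  shows "pm P V 0 = 0"
proof -
  have "pm P V 0 = (\<Sum>m\<in>{}. \<Sum>k\<in>{}. (of_int m gchoose k) * P m * dk k (V (0 + int k - m)))"
  proof (rule pmult_sub2)
    fix m k assume nz: "(of_int m gchoose k) * P m * dk k (V (0 + int k - m)) \<noteq> 0"
    have "m \<ge> 0" using nz P diffop_neg by (metis mult_zero_left mult_zero_right not_le)
    moreover have "0 + int k - m > 0" using nz V(2) by (metis dk0 mult_zero_right not_le)
    ultimately have "(of_int m gchoose k :: 'a) = 0" by (intro gc_big) auto
    thus "m \<in> {} \<and> k \<in> {}" using nz by simp
  qed (use assms in \<open>auto simp: diffop_pdo\<close>)
  thus ?thesis by simp
qed

lemma apply_pm:
  assumes P: "is_diffop P" and Q: "is_diffop Q"
  shows "apply_op der (pm P Q) f = apply_op der P (apply_op der Q f)"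
proof -
  define W where "W = pm Q (cst f)"
  have W: "is_diffop W" using Q by (simp add: W_def)
  have bP: "\<exists>N. bnd P N" and bQ: "\<exists>N. bnd Q N" using P Q diffop_pdo is_pdo_bnd by blast+
  have "apply_op der (pm P Q) f = pm (pm P Q) (cst f) 0" using P Q by (simp add: apply_eq_pm)
  also have "pm (pm P Q) (cst f) = pm P W" unfolding W_def using bP bQ bnd_cst pm_assoc by blast
  also have "pm P W = (\<lambda>j. pm P (\<lambda>j. W j - cst (W 0) j) j + pm P (cst (W 0)) j)"
  proof -
    obtain N where N: "bnd W N" "bnd (cst (W 0)) N"
      using pdo_bnd_common[of W "cst (W 0)"] W diffop_pdo by auto
    obtain M where M: "bnd P M" using bP by blast
    have "pm P (\<lambda>j. (\<lambda>j. W j - cst (W 0) j) j + cst (W 0) j) =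
        (\<lambda>j. pm P (\<lambda>j. W j - cst (W 0) j) j + pm P (cst (W 0)) j)"
      by (rule pm_add_right[OF M bnd_diff[OF N] N(2)])
    thus ?thesis by simp
  qed
  also have "pm P (\<lambda>j. W j - cst (W 0) j) 0 = 0"
    by (rule pm_zero_at0[OF P]) (use W in \<open>auto simp: diffop_pdo cst_def is_diffop_def\<close>)
  finally show ?thesis using P Q W by (simp add: apply_eq_pm W_def)
qed

lemma apply_add_f: "apply_op der X (a + b) = apply_op der X a + apply_op der X b"
  by (simp add: apply_op_def dk_add distrib_left sum.distrib)

lemma apply_cmult_f: "der c = 0 \<Longrightarrow> apply_op der X (c * a) = c * apply_op der X a"
  by (simp add: apply_op_def dk_const_mult sum_distrib_left mult.left_commute)

lemma apply_zero_f[simp]: "apply_op der X 0 = 0"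
  by (simp add: apply_op_def)

lemma apply_sum_f: "apply_op der X (\<Sum>i\<in>S. f i) = (\<Sum>i\<in>S. apply_op der X (f i))"
  by (induction S rule: infinite_finite_induct) (auto simp: apply_add_f)

lemma apply_lin_f:
  "(\<And>i. i \<in> S \<Longrightarrow> der (c i) = 0) \<Longrightarrow> apply_op der X (\<Sum>i\<in>S. c i * f i) = (\<Sum>i\<in>S. c i * apply_op der X (f i))"
  by (simp add: apply_sum_f apply_cmult_f)

end

lemma sum_int_nat: "(\<Sum>j\<in>{0..int M}. f j) = (\<Sum>k\<in>{0..M}. f (int k))"
proof -
  have "{0..int M} = int ` {0..M}" by (simp add: image_int_atLeastAtMost)
  thus ?thesis by (simp add: sum.reindex)
qed

context dfld begin

lemma pm_assoc':
  "is_pdo P \<Longrightarrow> is_pdo Q \<Longrightarrow> is_pdo R \<Longrightarrow> pm (pm P Q) R = pm P (pm Q R)"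
proof -
  assume "is_pdo P" "is_pdo Q" "is_pdo R"
  then obtain a b c where "bnd P a" "bnd Q b" "bnd R c" using is_pdo_bnd by blast
  thus ?thesis by (rule pm_assoc)
qed

lemma pm_add_left': "is_pdo P \<Longrightarrow> is_pdo Q \<Longrightarrow> is_pdo R \<Longrightarrow>
    pm (\<lambda>j. P j + Q j) R = (\<lambda>j. pm P R j + pm Q R j)"
proof -
  assume "is_pdo P" "is_pdo Q" "is_pdo R"
  then obtain a c where "bnd P a" "bnd Q a" "bnd R c" using is_pdo_bnd pdo_bnd_common by metis
  thus ?thesis by (rule pm_add_left)
qed
lemma pm_add_right': "is_pdo P \<Longrightarrow> is_pdo Q \<Longrightarrow> is_pdo R \<Longrightarrow>
    pm P (\<lambda>j. Q j + R j) = (\<lambda>j. pm P Q j + pm P R j)"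
proof -
  assume "is_pdo P" "is_pdo Q" "is_pdo R"
  then obtain a c where "bnd P a" "bnd Q c" "bnd R c" using is_pdo_bnd pdo_bnd_common by metis
  thus ?thesis by (rule pm_add_right)
qed
lemma pm_diff_left': "is_pdo P \<Longrightarrow> is_pdo Q \<Longrightarrow> is_pdo R \<Longrightarrow>
    pm (\<lambda>j. P j - Q j) R = (\<lambda>j. pm P R j - pm Q R j)"
proof -
  assume "is_pdo P" "is_pdo Q" "is_pdo R"
  then obtain a c where "bnd P a" "bnd Q a" "bnd R c" using is_pdo_bnd pdo_bnd_common by metis
  thus ?thesis by (rule pm_diff_left)
qed
lemma pm_diff_right': "is_pdo P \<Longrightarrow> is_pdo Q \<Longrightarrow> is_pdo R \<Longrightarrow>
    pm P (\<lambda>j. Q j - R j) = (\<lambda>j. pm P Q j - pm P R j)"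
proof -
  assume "is_pdo P" "is_pdo Q" "is_pdo R"
  then obtain a c where "bnd P a" "bnd Q c" "bnd R c" using is_pdo_bnd pdo_bnd_common by metis
  thus ?thesis by (rule pm_diff_right)
qed
lemma pm_sum_left': "finite S \<Longrightarrow> (\<And>i. i \<in> S \<Longrightarrow> is_pdo (f i)) \<Longrightarrow> is_pdo R \<Longrightarrow>
    pm (\<lambda>j. \<Sum>i\<in>S. f i j) R = (\<lambda>j. \<Sum>i\<in>S. pm (f i) R j)"
proof (induction S rule: finite_induct)
  case (insert x F)
  have "pm (\<lambda>j. \<Sum>i\<in>insert x F. f i j) R = pm (\<lambda>j. f x j + (\<Sum>i\<in>F. f i j)) R" using insert by simp
  also have "\<dots> = (\<lambda>j. pm (f x) R j + pm (\<lambda>j. \<Sum>i\<in>F. f i j) R j)"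
    by (rule pm_add_left') (use insert in auto)
  finally show ?case using insert by simp
qed simp
lemma pm_sum_right': "finite S \<Longrightarrow> (\<And>i. i \<in> S \<Longrightarrow> is_pdo (f i)) \<Longrightarrow> is_pdo P \<Longrightarrow>
    pm P (\<lambda>j. \<Sum>i\<in>S. f i j) = (\<lambda>j. \<Sum>i\<in>S. pm P (f i) j)"
proof (induction S rule: finite_induct)
  case (insert x F)
  have "pm P (\<lambda>j. \<Sum>i\<in>insert x F. f i j) = pm P (\<lambda>j. f x j + (\<Sum>i\<in>F. f i j))" using insert by simp
  also have "\<dots> = (\<lambda>j. pm P (f x) j + pm P (\<lambda>j. \<Sum>i\<in>F. f i j) j)"
    by (rule pm_add_right') (use insert in auto)
  finally show ?case using insert by simp
qed simp
lemma pm_smult_left': "is_pdo P \<Longrightarrow> is_pdo R \<Longrightarrow> pm (\<lambda>j. a * P j) R = (\<lambda>j. a * pm P R j)"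
  using pm_smult_left is_pdo_bnd by blast
lemma pm_smult_right': "is_pdo P \<Longrightarrow> is_pdo R \<Longrightarrow> der c = 0 \<Longrightarrow> pm P (\<lambda>j. c * R j) = (\<lambda>j. c * pm P R j)"
  using pm_smult_right is_pdo_bnd by blast

lemma DDinv: "is_pdo Z \<Longrightarrow> pm Dop (pm Dinv Z) = Z"
  using pm_assoc'[of Dop Dinv Z] by (simp add: pm_Dop_Dinv)
lemma DinvD: "is_pdo Z \<Longrightarrow> pm Dinv (pm Dop Z) = Z"
  using pm_assoc'[of Dinv Dop Z] by (simp add: pm_Dinv_Dop)

definition ct :: "'a pdo \<Rightarrow> 'a" where "ct X = pm Dinv X (-1)"

lemma ct_cst[simp]: "ct (cst c) = c"
  by (simp add: ct_def pm_Dinv_cst)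

lemma ct_add: "is_pdo X \<Longrightarrow> is_pdo Y \<Longrightarrow> ct (\<lambda>j. X j + Y j) = ct X + ct Y"
  by (simp add: ct_def pm_add_right')

lemma ct_diff: "is_pdo X \<Longrightarrow> is_pdo Y \<Longrightarrow> ct (\<lambda>j. X j - Y j) = ct X - ct Y"
  by (simp add: ct_def pm_diff_right')

lemma ct_Dop: "is_diffop Y \<Longrightarrow> ct (pm Dop Y) = 0"
  by (simp add: ct_def DinvD diffop_pdo diffop_neg)

lemma Dinv_tail:
  assumes "is_diffop Z" "j < 0"
  shows "pm Dinv Z (j - 1) = - der (pm Dinv Z j)"
proof -
  have "pm Dop (pm Dinv Z) j = Z j" using assms by (simp add: DDinv diffop_pdo)
  also have "\<dots> = 0" using assms diffop_neg by blast
  finally show ?thesis using assms by (simp add: pm_Dop_left diffop_pdo eq_neg_iff_add_eq_0)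
qed

lemma Dinv_diffop:
  assumes Z: "is_diffop Z" and c: "ct Z = 0"
  shows "is_diffop (pm Dinv Z)"
proof -
  have a: "pm Dinv Z (- 1 - int n) = 0" for n
  proof (induction n)
    case 0 then show ?case using c by (simp add: ct_def)
  next
    case (Suc n)
    have "pm Dinv Z (- 1 - int n - 1) = - der (pm Dinv Z (- 1 - int n))"
      by (rule Dinv_tail[OF Z]) simp
    then show ?case using Suc by (simp add: algebra_simps)
  qed
  have "pm Dinv Z j = 0" if "j < 0" for j
    using a[of "nat (- j - 1)"] that by simp
  thus ?thesis using Z by (simp add: is_diffop_def diffop_pdo)
qed

definition quot :: "'a pdo \<Rightarrow> 'a pdo" where "quot X = pm Dinv (\<lambda>j. X j - cst (ct X) j)"

lemma quot:
  assumes X: "is_diffop X"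
  shows "is_diffop (quot X)" "X = (\<lambda>j. pm Dop (quot X) j + cst (ct X) j)"
proof -
  have Z: "is_diffop (\<lambda>j. X j - cst (ct X) j)" using X by simp
  have "ct (\<lambda>j. X j - cst (ct X) j) = 0" using X by (simp add: ct_diff diffop_pdo)
  thus "is_diffop (quot X)" unfolding quot_def by (rule Dinv_diffop[OF Z])
  have "pm Dop (quot X) = (\<lambda>j. X j - cst (ct X) j)" unfolding quot_def
    by (rule DDinv) (use Z in \<open>simp add: diffop_pdo\<close>)
  thus "X = (\<lambda>j. pm Dop (quot X) j + cst (ct X) j)" by simp
qed

lemma ct_cmult:
  assumes B: "is_diffop B" "bnd B N"
  shows "ct (pm (cst q) B) = (\<Sum>k\<in>{0..nat (N + 1)}. (-1)^k * dk k (q * B (int k)))"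
proof -
  have "pm (cst q) B = (\<lambda>j. q * B j)" using B by (simp add: pm_cst_left diffop_pdo)
  moreover have "bnd (\<lambda>j. q * B j) N" using B bnd_smult by blast
  ultimately show ?thesis
    unfolding ct_def using pm_Dinv_left[of "\<lambda>j. q * B j" N "-1"] B
    by (simp add: diffop_pdo)
qed

lemma top_exists:
  assumes "is_pdo (X::'a pdo)" "X \<noteq> (\<lambda>_. 0)"
  shows "\<exists>t. X t \<noteq> 0 \<and> (\<forall>m>t. X m = 0)"
proof -
  obtain N where N: "bnd X N" using assms is_pdo_bnd by blast
  obtain n0 where n0: "X n0 \<noteq> 0" using assms by auto
  define S where "S = {n \<in> {n0..N}. X n \<noteq> 0}"
  have "n0 \<le> N" using n0 N bnd_zero not_le by blast
  hence n0S: "n0 \<in> S" using n0 by (simp add: S_def)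
  have fS: "finite S" unfolding S_def by (rule finite_subset[of _ "{n0..N}"]) auto
  define t where "t = Max S"
  have tS: "t \<in> S" unfolding t_def using fS n0S by (intro Max_in) auto
  have "X m = 0" if "m > t" for m
  proof (rule ccontr)
    assume nz: "X m \<noteq> 0"
    have "m \<le> N" using nz N bnd_zero not_le by blast
    moreover have "n0 \<le> m" using tS that by (auto simp: S_def)
    ultimately have "m \<in> S" using nz by (auto simp: S_def)
    hence "m \<le> t" using fS by (simp add: t_def)
    thus False using that by simp
  qed
  thus ?thesis using tS by (auto simp: S_def)
qed

lemma pm_top:
  assumes P: "is_pdo P" "\<And>m. m > a \<Longrightarrow> P m = 0" and Q: "is_pdo Q" "\<And>m. m > b \<Longrightarrow> Q m = 0"
  shows "pm P Q (a + b) = P a * Q b" "\<And>m. m > a + b \<Longrightarrow> pm P Q m = 0"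
proof -
  have "pm P Q (a + b) = (\<Sum>m\<in>{a}. \<Sum>k\<in>{0}. (of_int m gchoose k) * P m * dk k (Q (a + b + int k - m)))"
  proof (rule pmult_sub2)
    fix m k assume nz: "(of_int m gchoose k) * P m * dk k (Q (a + b + int k - m)) \<noteq> 0"
    have "m \<le> a" using nz P(2) by (metis mult_zero_left mult_zero_right not_le)
    moreover have "a + b + int k - m \<le> b" using nz Q(2) by (metis dk0 mult_zero_right not_le)
    ultimately show "m \<in> {a} \<and> k \<in> {0}" by auto
  qed (use P Q in auto)
  thus "pm P Q (a + b) = P a * Q b" by simp
  have "bnd (pm P Q) (a + b)" by (rule bnd_pmult) (use P Q in \<open>auto simp: bnd_def\<close>)
  thus "\<And>m. m > a + b \<Longrightarrow> pm P Q m = 0" by (simp add: bnd_def)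
qed

lemma pm_nonzero:
  assumes "is_pdo P" "is_pdo Q" "P \<noteq> (\<lambda>_. 0)" "Q \<noteq> (\<lambda>_. 0)"
  shows "pm P Q \<noteq> (\<lambda>_. 0)"
proof -
  obtain a where a: "P a \<noteq> 0" "\<forall>m>a. P m = 0" using top_exists assms by blast
  obtain b where b: "Q b \<noteq> 0" "\<forall>m>b. Q m = 0" using top_exists assms by blast
  have "pm P Q (a + b) = P a * Q b" using pm_top(1)[of P a Q b] a b assms by auto
  thus ?thesis using a b by (metis mult_eq_0_iff)
qed

lemma cancel_right: "is_pdo X \<Longrightarrow> is_pdo B \<Longrightarrow> B \<noteq> (\<lambda>_. 0) \<Longrightarrow> pm X B = (\<lambda>_. 0) \<Longrightarrow> X = (\<lambda>_. 0)"
  using pm_nonzero by blast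

lemma cancel_left: "is_pdo X \<Longrightarrow> is_pdo B \<Longrightarrow> B \<noteq> (\<lambda>_. 0) \<Longrightarrow> pm B X = (\<lambda>_. 0) \<Longrightarrow> X = (\<lambda>_. 0)"
  using pm_nonzero by blast

lemma dord_prop:
  assumes P: "is_diffop (P::'a pdo)" "P \<noteq> (\<lambda>_. 0)"
  shows "P (int (dord P)) \<noteq> 0" "\<And>m. m > int (dord P) \<Longrightarrow> P m = 0"
proof -
  obtain N where N: "bnd P N" using P diffop_pdo is_pdo_bnd by blast
  have sub: "{n. P n \<noteq> 0} \<subseteq> {0..N}" using diffop_supp[OF P(1) N] .
  have fin: "finite {n. P n \<noteq> 0}" using sub finite_subset by blast
  have ne: "{n. P n \<noteq> 0} \<noteq> {}" using P(2) by auto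
  define t where "t = Max {n. P n \<noteq> 0}"
  have t: "t \<in> {n. P n \<noteq> 0}" unfolding t_def using fin ne by (rule Max_in)
  have t0: "t \<ge> 0" using t sub by auto
  have d: "int (dord P) = t" using t0 by (simp add: dord_def t_def)
  show "P (int (dord P)) \<noteq> 0" using t d by simp
  show "\<And>m. m > int (dord P) \<Longrightarrow> P m = 0"
  proof (rule ccontr)
    fix m assume "m > int (dord P)" "P m \<noteq> 0"
    hence "m \<le> t" using fin by (simp add: t_def)
    thus False using \<open>m > int (dord P)\<close> d by simp
  qed
qed

lemma dord_eq:
  assumes "is_diffop (P::'a pdo)" "P t \<noteq> 0" "\<And>m. m > t \<Longrightarrow> P m = 0"
  shows "dord P = nat t"
proof -
  have nz: "P \<noteq> (\<lambda>_. 0)" using assms by auto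
  have "\<not> int (dord P) < t" using dord_prop(2)[OF assms(1) nz] assms(2) by blast
  moreover have "\<not> t < int (dord P)" using dord_prop(1)[OF assms(1) nz] assms(3) by blast
  ultimately have "int (dord P) = t" by simp
  thus ?thesis by simp
qed

lemma dord_pm:
  assumes P: "is_diffop P" "P \<noteq> (\<lambda>_. 0)" and Q: "is_diffop Q" "Q \<noteq> (\<lambda>_. 0)"
  shows "dord (pm P Q) = dord P + dord Q" "pm P Q \<noteq> (\<lambda>_. 0)"
proof -
  have t: "pm P Q (int (dord P) + int (dord Q)) = P (dord P) * Q (dord Q)"
    "\<And>m. m > int (dord P) + int (dord Q) \<Longrightarrow> pm P Q m = 0"
    using pm_top[of P "int (dord P)" Q "int (dord Q)"] dord_prop[OF P] dord_prop[OF Q] P Q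
    by (auto simp: diffop_pdo)
  have nz: "pm P Q (int (dord P) + int (dord Q)) \<noteq> 0" using t(1) dord_prop[OF P] dord_prop[OF Q] by simp
  have "dord (pm P Q) = nat (int (dord P) + int (dord Q))"
    by (rule dord_eq) (use P Q nz t(2) in auto)
  thus "dord (pm P Q) = dord P + dord Q" by simp
  show "pm P Q \<noteq> (\<lambda>_. 0)" using nz by auto
qed

end

context dfld begin

lemma adj_bnd:
  assumes B: "is_diffop B" "bnd B N"
  shows "bnd (adjoint der B) N"
  unfolding bnd_def
proof (intro allI impI)
  fix j assume j: "j > N"
  have e: "{n. B n \<noteq> 0 \<and> j \<le> n} = {}" using j B(2) bnd_zero by fastforce
  show "adjoint der B j = 0" unfolding adjoint_def e by simp
qed

lemma adj_diffop:
  assumes B: "is_diffop B"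
  shows "is_diffop (adjoint der B)"
proof -
  obtain N where "bnd B N" using B diffop_pdo is_pdo_bnd by blast
  hence "is_pdo (adjoint der B)" using B adj_bnd is_pdo_bnd by blast
  thus ?thesis by (simp add: is_diffop_def adjoint_def)
qed

lemma adj_top:
  assumes B: "is_diffop B" "B \<noteq> (\<lambda>_. 0)"
  shows "adjoint der B (int (dord B)) = (-1) ^ dord B * B (int (dord B))"
    "\<And>m. m > int (dord B) \<Longrightarrow> adjoint der B m = 0"
proof -
  define d where "d = int (dord B)"
  have bd: "bnd B d" using dord_prop(2)[OF B] by (simp add: bnd_def d_def)
  show "\<And>m. m > int (dord B) \<Longrightarrow> adjoint der B m = 0"
    using adj_bnd[OF B(1) bd] by (simp add: bnd_def d_def)
  have le: "B n \<noteq> 0 \<Longrightarrow> n \<le> d" for n using dord_prop(2)[OF B] d_def not_le by blast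
  have e: "{n. B n \<noteq> 0 \<and> d \<le> n} = {d}" using dord_prop(1)[OF B] le d_def by force
  have "adjoint der B d = (-1) ^ dord B * B d"
    unfolding adjoint_def e by (simp add: d_def)
  thus "adjoint der B (int (dord B)) = (-1) ^ dord B * B (int (dord B))" by (simp add: d_def)
qed

lemma dord_adj:
  assumes B: "is_diffop B" "B \<noteq> (\<lambda>_. 0)"
  shows "dord (adjoint der B) = dord B" "adjoint der B \<noteq> (\<lambda>_. 0)"
proof -
  have nz: "adjoint der B (int (dord B)) \<noteq> 0" using adj_top(1)[OF B] dord_prop(1)[OF B] by simp
  show "dord (adjoint der B) = dord B"
    using dord_eq[OF adj_diffop[OF B(1)] nz adj_top(2)[OF B]] by simp
  show "adjoint der B \<noteq> (\<lambda>_. 0)" using nz by auto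
qed

lemma apply_adjoint:
  assumes B: "is_diffop B" "bnd B (int M)"
  shows "apply_op der (adjoint der B) q = (\<Sum>k\<in>{0..M}. (-1)^k * dk k (q * B (int k)))"
proof -
  define A where "A = adjoint der B"
  have A: "is_diffop A" "bnd A (int M)" using adj_diffop[OF B(1)] adj_bnd[OF B] by (auto simp: A_def)
  have "apply_op der A q = (\<Sum>j\<in>{0..int M}. A j * dk (nat j) q)" using apply_box[OF A] .
  also have "\<dots> = (\<Sum>j\<in>{0..M}. A (int j) * dk j q)" by (simp add: sum_int_nat)
  also have "\<dots> = (\<Sum>j\<in>{0..M}. \<Sum>n\<in>{0..M}. if j \<le> n then (-1)^n * of_nat (n choose j) * dk (n - j) (B (int n)) * dk j q else 0)"
  proof (rule sum.cong[OF refl])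
    fix j assume j: "j \<in> {0..M}"
    have "A (int j) = (\<Sum>n\<in>{n. B n \<noteq> 0 \<and> int j \<le> n}.
         (-1) ^ nat n * of_nat (nat n choose nat (n - int j)) * dk (nat (n - int j)) (B n))"
      by (simp add: A_def adjoint_def)
    also have "\<dots> = (\<Sum>n\<in>{0..int M}. if int j \<le> n then
         (-1) ^ nat n * of_nat (nat n choose nat (n - int j)) * dk (nat (n - int j)) (B n) else 0)"
    proof -
      have "(\<Sum>n\<in>{0..int M}. if int j \<le> n then
         (-1) ^ nat n * of_nat (nat n choose nat (n - int j)) * dk (nat (n - int j)) (B n) else 0)
        = (\<Sum>n\<in>{n\<in>{0..int M}. int j \<le> n}.
         (-1) ^ nat n * of_nat (nat n choose nat (n - int j)) * dk (nat (n - int j)) (B n))"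
        by (rule sum.inter_filter[symmetric]) simp
      also have "\<dots> = (\<Sum>n\<in>{n. B n \<noteq> 0 \<and> int j \<le> n}.
         (-1) ^ nat n * of_nat (nat n choose nat (n - int j)) * dk (nat (n - int j)) (B n))"
      proof (rule sum.mono_neutral_right)
        show "finite {n \<in> {0..int M}. int j \<le> n}" by (rule finite_subset[of _ "{0..int M}"]) auto
        show "{n. B n \<noteq> 0 \<and> int j \<le> n} \<subseteq> {n \<in> {0..int M}. int j \<le> n}"
          using diffop_supp[OF B] by auto
        show "\<forall>i\<in>{n \<in> {0..int M}. int j \<le> n} - {n. B n \<noteq> 0 \<and> int j \<le> n}.
            (-1) ^ nat i * of_nat (nat i choose nat (i - int j)) * dk (nat (i - int j)) (B i) = 0"
          by auto
      qed
      finally show ?thesis by simp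
    qed
    also have "\<dots> = (\<Sum>n\<in>{0..M}. if j \<le> n then (-1)^n * of_nat (n choose (n - j)) * dk (n - j) (B (int n)) else 0)"
    proof -
      have e: "j \<le> k \<Longrightarrow> nat (int k - int j) = k - j" for k by auto
      show ?thesis unfolding sum_int_nat by (rule sum.cong[OF refl]) (simp add: e)
    qed
    also have "\<dots> = (\<Sum>n\<in>{0..M}. if j \<le> n then (-1)^n * of_nat (n choose j) * dk (n - j) (B (int n)) else 0)"
      by (rule sum.cong[OF refl]) (auto simp: binomial_symmetric[symmetric])
    finally show "A (int j) * dk j q = (\<Sum>n\<in>{0..M}. if j \<le> n then (-1)^n * of_nat (n choose j) * dk (n - j) (B (int n)) * dk j q else 0)"
      by (simp add: sum_distrib_right) (rule sum.cong[OF refl], simp)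
  qed
  also have "\<dots> = (\<Sum>n\<in>{0..M}. \<Sum>j\<in>{0..M}. if j \<le> n then (-1)^n * of_nat (n choose j) * dk (n - j) (B (int n)) * dk j q else 0)"
    by (rule sum.swap)
  also have "\<dots> = (\<Sum>n\<in>{0..M}. (-1)^n * dk n (q * B (int n)))"
  proof (rule sum.cong[OF refl])
    fix n assume n: "n \<in> {0..M}"
    have "{j \<in> {0..M}. j \<le> n} = {..n}" using n by auto
    hence "(\<Sum>j\<in>{0..M}. if j \<le> n then (-1)^n * of_nat (n choose j) * dk (n - j) (B (int n)) * dk j q else 0)
        = (\<Sum>j\<le>n. (-1)^n * of_nat (n choose j) * dk (n - j) (B (int n)) * dk j q)"
      by (simp add: sum.inter_filter[symmetric])
    also have "\<dots> = (-1)^n * (\<Sum>j\<le>n. of_nat (n choose j) * dk j q * dk (n - j) (B (int n)))"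
      by (simp add: sum_distrib_left mult_ac)
    also have "\<dots> = (-1)^n * dk n (q * B (int n))" by (simp add: leibniz)
    finally show "(\<Sum>j\<in>{0..M}. if j \<le> n then (-1)^n * of_nat (n choose j) * dk (n - j) (B (int n)) * dk j q else 0)
        = (-1)^n * dk n (q * B (int n))" .
  qed
  finally show ?thesis by (simp add: A_def)
qed

end

context dfld begin

lemma dconst_div: "der c = 0 \<Longrightarrow> der d = 0 \<Longrightarrow> der (c / d) = 0"
  by (simp add: divide_inverse dmult dinv_const)

lemma ms_lemma:
  assumes ind: "lin_indep_C der n f"
  shows "(\<And>t. (\<Sum>i<n. a i * dk t (f i)) = 0) \<Longrightarrow> i < n \<Longrightarrow> a i = 0"
proof (induction "card {i. i < n \<and> a i \<noteq> 0}" arbitrary: a i rule: less_induct)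
  case less
  show ?case
  proof (rule ccontr)
    assume nz: "a i \<noteq> 0"
    define b where "b k = a k / a i" for k
    have bsys: "(\<Sum>k<n. b k * dk t (f k)) = 0" for t
    proof -
      have "(\<Sum>k<n. b k * dk t (f k)) = (\<Sum>k<n. a k * dk t (f k) / a i)"
        by (rule sum.cong[OF refl]) (simp add: b_def)
      also have "\<dots> = (\<Sum>k<n. a k * dk t (f k)) / a i"
        by (rule sum_divide_distrib[symmetric])
      finally show ?thesis using less.prems(1)[of t] by simp
    qed
    define c where "c k = der (b k)" for k
    have csys: "(\<Sum>k<n. c k * dk t (f k)) = 0" for t
    proof -
      have "der (\<Sum>k<n. b k * dk t (f k)) = (\<Sum>k<n. c k * dk t (f k) + b k * dk (Suc t) (f k))"
        unfolding dsum by (rule sum.cong[OF refl]) (simp add: dmult c_def)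
      also have "\<dots> = (\<Sum>k<n. c k * dk t (f k)) + (\<Sum>k<n. b k * dk (Suc t) (f k))"
        by (rule sum.distrib)
      finally show ?thesis using bsys[of t] bsys[of "Suc t"] by simp
    qed
    have bi: "b i = 1" using nz by (simp add: b_def)
    have fin: "finite {k. k < n \<and> a k \<noteq> 0}" by simp
    have sub: "{k. k < n \<and> c k \<noteq> 0} \<subseteq> {k. k < n \<and> a k \<noteq> 0} - {i}"
    proof
      fix k assume k: "k \<in> {k. k < n \<and> c k \<noteq> 0}"
      hence "k \<noteq> i" using bi by (auto simp: c_def)
      moreover have "a k \<noteq> 0" using k by (auto simp: c_def b_def)
      ultimately show "k \<in> {k. k < n \<and> a k \<noteq> 0} - {i}" using k by simp
    qed
    have "card {k. k < n \<and> c k \<noteq> 0} \<le> card ({k. k < n \<and> a k \<noteq> 0} - {i})"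
      by (rule card_mono) (use sub fin in simp_all)
    also have "\<dots> < card {k. k < n \<and> a k \<noteq> 0}"
      by (rule card_Diff1_less[OF fin]) (use nz less.prems(2) in simp)
    finally have lt: "card {k. k < n \<and> c k \<noteq> 0} < card {k. k < n \<and> a k \<noteq> 0}" .
    have c0: "c k = 0" if "k < n" for k
      by (rule less.hyps[OF lt]) (use csys that in simp_all)
    have h1: "\<forall>k<n. der (b k) = 0" using c0 by (simp add: c_def)
    have h2: "(\<Sum>k<n. b k * f k) = 0" using bsys[of 0] by simp
    have "\<forall>k<n. b k = 0" using ind h1 h2 unfolding lin_indep_C_def by blast
    thus False using bi less.prems(2) by simp
  qed
qed

definition mono :: "'a \<Rightarrow> int \<Rightarrow> 'a pdo" where "mono a k = (\<lambda>j. if j = k then a else 0)"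
definition Dm :: "'a \<Rightarrow> 'a pdo" where "Dm u = (\<lambda>j. Dop j - cst u j)"

lemma diffop_Dm[simp]: "is_diffop (Dm u)" by (simp add: Dm_def)
lemma diffop_mono[simp]: "k \<ge> 0 \<Longrightarrow> is_diffop (mono a k)" by (simp add: is_diffop_def mono_def)

lemma apply_cst[simp]: "apply_op der (cst r) f = r * f"
proof -
  have "apply_op der (cst r) f = (\<Sum>n\<in>{0}. cst r n * dk (nat n) f)"
    by (rule apply_sub) (auto simp: cst_def)
  thus ?thesis by (simp add: cst_def)
qed

lemma apply_add_op:
  assumes "is_diffop X" "is_diffop Y"
  shows "apply_op der (\<lambda>j. X j + Y j) f = apply_op der X f + apply_op der Y f"
proof -
  obtain N where N: "bnd X N" "bnd Y N" using assms pdo_bnd_common diffop_pdo by blast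
  have XY: "bnd (\<lambda>j. X j + Y j) N" using N bnd_add by blast
  show ?thesis using apply_box[OF assms(1) N(1)] apply_box[OF assms(2) N(2)]
      apply_box[OF diffop_add[OF assms] XY]
    by (simp add: distrib_right sum.distrib)
qed

lemma apply_diff_op:
  assumes "is_diffop X" "is_diffop Y"
  shows "apply_op der (\<lambda>j. X j - Y j) f = apply_op der X f - apply_op der Y f"
proof -
  obtain N where N: "bnd X N" "bnd Y N" using assms pdo_bnd_common diffop_pdo by blast
  have XY: "bnd (\<lambda>j. X j - Y j) N" using N bnd_diff by blast
  show ?thesis using apply_box[OF assms(1) N(1)] apply_box[OF assms(2) N(2)]
      apply_box[OF diffop_diff[OF assms] XY]
    by (simp add: left_diff_distrib sum_subtractf)
qed

lemma apply_Dop[simp]: "apply_op der Dop f = der f"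
proof -
  have "apply_op der Dop f = (\<Sum>n\<in>{1}. Dop n * dk (nat n) f)"
    by (rule apply_sub) (auto simp: Dop_def)
  thus ?thesis by (simp add: Dop_def)
qed

lemma apply_Dm[simp]: "apply_op der (Dm u) f = der f - u * f"
  unfolding Dm_def by (simp add: apply_diff_op)

lemma rdiv_aux:
  "is_diffop P \<Longrightarrow> bnd P (int N) \<Longrightarrow>
    \<exists>Q r. is_diffop Q \<and> bnd Q (int N - 1) \<and> P = (\<lambda>j. pm Q (Dm u) j + cst r j)"
proof (induction N arbitrary: P)
  case 0
  have "P j = cst (P 0) j" for j
  proof (cases "j < 0")
    case True
    have "P j = 0" using 0(1) True by (rule diffop_neg)
    then show ?thesis using True by (simp add: cst_def)
  next
    case False then show ?thesis using 0 by (cases "j = 0") (auto simp: cst_def bnd_def)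
  qed
  hence "P = cst (P 0)" by (rule ext)
  hence "P = (\<lambda>j. pm (\<lambda>_. 0) (Dm u) j + cst (P 0) j)" by simp
  thus ?case by (intro exI[of _ "\<lambda>_. 0"] exI[of _ "P 0"]) (simp add: bnd_def)
next
  case (Suc N)
  define M where "M = mono (P (int (Suc N))) (int N)"
  have M: "is_diffop M" by (simp add: M_def)
  have "pm M (Dm u) = (\<lambda>j. pm M Dop j - pm M (cst u) j)"
    unfolding Dm_def by (rule pm_diff_right') (use M in \<open>auto simp: diffop_pdo\<close>)
  also have "pm M Dop = mono (P (int (Suc N))) (int (Suc N))"
    using M by (auto simp: pm_Dop_right diffop_pdo M_def mono_def fun_eq_iff)
  finally have MD: "pm M (Dm u) = (\<lambda>j. mono (P (int (Suc N))) (int (Suc N)) j - pm M (cst u) j)" .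
  have bM: "bnd M (int N)" by (simp add: bnd_def M_def mono_def)
  have bMc: "bnd (pm M (cst u)) (int N)"
    using bnd_pmult[OF bM bnd_cst] by simp
  define P' where "P' = (\<lambda>j. P j - pm M (Dm u) j)"
  have P': "is_diffop P'" using Suc M by (simp add: P'_def)
  have bP': "bnd P' (int N)"
    using Suc.prems(2) bMc by (auto simp: bnd_def P'_def MD mono_def)
  obtain Q r where Qr: "is_diffop Q" "bnd Q (int N - 1)" "P' = (\<lambda>j. pm Q (Dm u) j + cst r j)"
    using Suc.IH[OF P' bP'] by blast
  have "pm (\<lambda>j. Q j + M j) (Dm u) = (\<lambda>j. pm Q (Dm u) j + pm M (Dm u) j)"
    by (rule pm_add_left') (use Qr M in \<open>auto simp: diffop_pdo\<close>)
  moreover have "P j = pm Q (Dm u) j + pm M (Dm u) j + cst r j" for j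
    using fun_cong[OF Qr(3), of j] by (simp add: P'_def diff_eq_eq algebra_simps)
  ultimately have "P = (\<lambda>j. pm (\<lambda>j. Q j + M j) (Dm u) j + cst r j)"
    by (simp add: fun_eq_iff)
  moreover have "bnd (\<lambda>j. Q j + M j) (int (Suc N) - 1)"
    using Qr(2) by (auto simp: bnd_def M_def mono_def)
  ultimately show ?case using Qr M by (intro exI[of _ "\<lambda>j. Q j + M j"] exI[of _ r]) auto
qed

lemma dord_le_bnd: "is_diffop (Q::'a pdo) \<Longrightarrow> Q \<noteq> (\<lambda>_. 0) \<Longrightarrow> bnd Q K \<Longrightarrow> int (dord Q) \<le> K"
  using dord_prop(1) bnd_zero not_le by blast

lemma dim_bound:
  "is_diffop P \<Longrightarrow> P \<noteq> (\<lambda>_. 0) \<Longrightarrow> lin_indep_C der m g \<Longrightarrow> (\<forall>i<m. apply_op der P (g i) = 0) \<Longrightarrow> m \<le> dord P"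
proof (induction "dord P" arbitrary: P m g rule: less_induct)
  case less
  show ?case
  proof (cases m)
    case 0 then show ?thesis by simp
  next
    case (Suc m')
    have g0: "g 0 \<noteq> 0"
    proof
      assume g00: "g 0 = 0"
      have "(\<Sum>i<m. (if i = 0 then 1 else 0) * g i) = (\<Sum>i<m. if i = 0 then g i else 0)"
        by (rule sum.cong) auto
      also have "\<dots> = 0" using g00 by (simp add: sum.delta)
      finally have s0: "(\<Sum>i<m. (if i = 0 then 1 else 0) * g i) = 0" .
      have L: "\<And>c. (\<forall>i<m. der (c i) = 0) \<Longrightarrow> (\<Sum>i<m. c i * g i) = 0 \<Longrightarrow> \<forall>i<m. c i = 0"
        using less.prems(3) unfolding lin_indep_C_def by blast
      have "\<forall>i<m. (if i = 0 then 1 else 0::'a) = 0" by (rule L) (simp_all add: s0)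
      thus False using Suc by auto
    qed
    define u where "u = der (g 0) / g 0"
    have bP: "bnd P (int (dord P))" using dord_prop(2)[OF less.prems(1,2)] by (simp add: bnd_def)
    obtain Q r where Qr: "is_diffop Q" "bnd Q (int (dord P) - 1)" "P = (\<lambda>j. pm Q (Dm u) j + cst r j)"
      using rdiv_aux[OF less.prems(1) bP] by blast
    have Dg0: "apply_op der (Dm u) (g 0) = 0" using g0 by (simp add: u_def)
    have appP: "apply_op der P f = apply_op der Q (apply_op der (Dm u) f) + r * f" for f
      using Qr by (subst Qr(3)) (simp add: apply_add_op apply_pm)
    have "r * g 0 = 0" using appP[of "g 0"] Dg0 less.prems(4) Suc by simp
    hence r0: "r = 0" using g0 by simp
    have Qnz: "Q \<noteq> (\<lambda>_. 0)"
    proof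
      assume "Q = (\<lambda>_. 0)"
      hence "P = (\<lambda>_. 0)" using Qr(3) r0 by (simp add: cst_def)
      thus False using less.prems(2) by simp
    qed
    have dQ: "dord Q < dord P" using dord_le_bnd[OF Qr(1) Qnz Qr(2)] by simp
    define h where "h i = apply_op der (Dm u) (g (Suc i))" for i
    have hker: "\<forall>i<m'. apply_op der Q (h i) = 0"
      using less.prems(4) appP r0 Suc by (auto simp: h_def)
    have hind: "lin_indep_C der m' h"
      unfolding lin_indep_C_def
    proof (rule allI, rule impI)
      fix c assume c: "(\<forall>i<m'. der (c i) = 0) \<and> (\<Sum>i<m'. c i * h i) = 0"
      define e where "e = (\<Sum>i<m'. c i * g (Suc i)) / g 0"
      define X where "X = (\<Sum>i<m'. c i * g (Suc i))"
      have cc: "\<And>i. i < m' \<Longrightarrow> der (c i) = 0" using c by blast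
      have dX: "der X = (\<Sum>i<m'. c i * der (g (Suc i)))"
        unfolding X_def dsum by (rule sum.cong[OF refl]) (simp add: dconst_mult cc)
      have "(\<Sum>i<m'. c i * h i) = (\<Sum>i<m'. c i * der (g (Suc i)) - u * (c i * g (Suc i)))"
        by (rule sum.cong[OF refl]) (simp add: h_def algebra_simps)
      also have "\<dots> = der X - u * X"
        unfolding dX by (simp add: X_def sum_subtractf sum_distrib_left)
      also have "\<dots> = g 0 * der e"
      proof -
        have gi: "g 0 * inverse (g 0) = 1" using g0 by simp
        have "g 0 * der e = g 0 * (der X * inverse (g 0) + X * (- der (g 0) * inverse (g 0) * inverse (g 0)))"
          by (simp add: e_def X_def divide_inverse dmult dinverse[OF g0])
        also have "\<dots> = der X * (g 0 * inverse (g 0)) - X * der (g 0) * inverse (g 0) * (g 0 * inverse (g 0))"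
          by (simp add: algebra_simps)
        also have "\<dots> = der X - u * X" by (simp only: gi) (simp add: u_def divide_inverse mult_ac)
        finally show ?thesis by simp
      qed
      finally have "(\<Sum>i<m'. c i * h i) = g 0 * der e" .
      hence de: "der e = 0" using c g0 by simp
      define c' where "c' i = (if i = 0 then - e else c (i - 1))" for i
      have "(\<Sum>i<m. c' i * g i) = - e * g 0 + (\<Sum>i<m'. c i * g (Suc i))"
        unfolding Suc by (subst sum.lessThan_Suc_shift) (simp add: c'_def)
      also have "\<dots> = 0" using g0 by (simp add: e_def X_def)
      finally have sz: "(\<Sum>i<m. c' i * g i) = 0" .
      have dc': "\<forall>i<m. der (c' i) = 0"
      proof (intro allI impI)
        fix i assume i: "i < m"
        show "der (c' i) = 0"
        proof (cases i)
          case 0 then show ?thesis using de by (simp add: c'_def)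
        next
          case (Suc i') then show ?thesis using cc i \<open>m = Suc m'\<close> by (simp add: c'_def)
        qed
      qed
      have "\<forall>i<m. c' i = 0" using less.prems(3) sz dc' unfolding lin_indep_C_def by blast
      show "\<forall>i<m'. c i = 0"
      proof (intro allI impI)
        fix i assume "i < m'"
        hence "c' (Suc i) = 0" using \<open>\<forall>i<m. c' i = 0\<close> Suc by simp
        thus "c i = 0" by (simp add: c'_def)
      qed
    qed
    have "m' \<le> dord Q" by (rule less.hyps[OF dQ Qr(1) Qnz hind hker])
    thus ?thesis using Suc dQ by simp
  qed
qed

end

context dfld begin

lemma indep_nz: "lin_indep_C der n g \<Longrightarrow> i < n \<Longrightarrow> g i \<noteq> 0"
proof
  assume L: "lin_indep_C der n g" and i: "i < n" and g0: "g i = 0"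
  have "(\<Sum>k<n. (if k = i then 1 else 0) * g k) = (\<Sum>k<n. if k = i then g k else 0)"
    by (rule sum.cong) auto
  also have "\<dots> = 0" using g0 by (simp add: sum.delta)
  finally have s0: "(\<Sum>k<n. (if k = i then 1 else 0) * g k) = 0" .
  have LL: "\<And>c. (\<forall>k<n. der (c k) = 0) \<Longrightarrow> (\<Sum>k<n. c k * g k) = 0 \<Longrightarrow> \<forall>k<n. c k = 0"
    using L unfolding lin_indep_C_def by blast
  have "\<forall>k<n. (if k = i then 1 else 0::'a) = 0" by (rule LL) (simp_all add: s0)
  thus False using i by auto
qed

lemma span_sub_kernel:
  assumes "\<forall>i<n. apply_op der P (f i) = 0"
  shows "span_C der n f \<subseteq> kernel der P"
proof
  fix x assume "x \<in> span_C der n f"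
  then obtain c where c: "x = (\<Sum>i<n. c i * f i)" "\<forall>i<n. der (c i) = 0"
    by (auto simp: span_C_def)
  have "apply_op der P x = (\<Sum>i<n. c i * apply_op der P (f i))"
    unfolding c(1) by (rule apply_lin_f) (use c(2) in auto)
  also have "\<dots> = 0" using assms by simp
  finally show "x \<in> kernel der P" by (simp add: kernel_def)
qed

lemma extend_indep:
  assumes L: "lin_indep_C der m g" and f: "f \<notin> span_C der m g"
  shows "lin_indep_C der (Suc m) (g(m := f))"
  unfolding lin_indep_C_def
proof (rule allI, rule impI)
  fix c assume c: "(\<forall>i<Suc m. der (c i) = 0) \<and> (\<Sum>i<Suc m. c i * (g(m := f)) i) = 0"
  have s: "(\<Sum>i<m. c i * g i) + c m * f = 0"
  proof -
    have "(\<Sum>i<Suc m. c i * (g(m := f)) i) = (\<Sum>i<m. c i * (g(m := f)) i) + c m * f" by simp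
    also have "(\<Sum>i<m. c i * (g(m := f)) i) = (\<Sum>i<m. c i * g i)" by (rule sum.cong) auto
    finally show ?thesis using c by simp
  qed
  have cm: "c m = 0"
  proof (rule ccontr)
    assume nz: "c m \<noteq> 0"
    have "f = (\<Sum>i<m. (- c i / c m) * g i)"
    proof -
      have "c m * f = - (\<Sum>i<m. c i * g i)" using s by (simp add: eq_neg_iff_add_eq_0 add.commute)
      hence "f = - (\<Sum>i<m. c i * g i) / c m" using nz by (simp add: field_simps)
      also have "\<dots> = (\<Sum>i<m. (- c i / c m) * g i)"
        by (simp add: sum_divide_distrib sum_negf[symmetric])
      finally show ?thesis .
    qed
    moreover have "\<forall>i<m. der (- c i / c m) = 0" using c by (auto intro!: dconst_div)
    ultimately have "f \<in> span_C der m g" unfolding span_C_def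
      by (intro CollectI exI[of _ "\<lambda>i. - c i / c m"]) auto
    thus False using f by simp
  qed
  hence "(\<Sum>i<m. c i * g i) = 0" using s by simp
  hence "\<forall>i<m. c i = 0" using L c unfolding lin_indep_C_def by auto
  thus "\<forall>i<Suc m. c i = 0" using cm by (auto simp: less_Suc_eq)
qed

lemma kernel_span:
  assumes P: "is_diffop P" "P \<noteq> (\<lambda>_. 0)" and L: "lin_indep_C der m g"
    and K: "\<forall>i<m. apply_op der P (g i) = 0" and m: "m = dord P"
  shows "kernel der P = span_C der m g"
proof
  show "span_C der m g \<subseteq> kernel der P" by (rule span_sub_kernel[OF K])
  show "kernel der P \<subseteq> span_C der m g"
  proof
    fix f assume f: "f \<in> kernel der P"
    show "f \<in> span_C der m g"
    proof (rule ccontr)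
      assume "f \<notin> span_C der m g"
      hence L': "lin_indep_C der (Suc m) (g(m := f))" by (rule extend_indep[OF L])
      have "\<forall>i<Suc m. apply_op der P ((g(m := f)) i) = 0"
        using K f by (auto simp: kernel_def less_Suc_eq)
      hence "Suc m \<le> dord P" using dim_bound[OF P L'] by blast
      thus False using m by simp
    qed
  qed
qed

lemma full_kernel_intro:
  assumes "is_diffop P" "P \<noteq> (\<lambda>_. 0)" "lin_indep_C der (dord P) g" "\<forall>i<dord P. apply_op der P (g i) = 0"
  shows "full_kernel der P"
  unfolding full_kernel_def using kernel_span[OF assms refl] assms(3) by blast

lemma bnd_nat: "is_pdo P \<Longrightarrow> \<exists>M::nat. bnd P (int M)"
proof -
  assume "is_pdo P"
  then obtain N where "bnd P N" using is_pdo_bnd by blast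
  hence "bnd P (int (nat N))" by (rule bnd_mono) simp
  thus ?thesis by blast
qed

lemma adj_ct:
  assumes B: "is_diffop B"
  shows "apply_op der (adjoint der B) q = ct (pm (cst q) B)"
proof -
  obtain M where M: "bnd B (int M)" using bnd_nat B diffop_pdo by blast
  have "ct (pm (cst q) B) = (\<Sum>k\<in>{0..nat (int M + 1)}. (-1)^k * dk k (q * B (int k)))"
    by (rule ct_cmult[OF B M])
  also have "\<dots> = (\<Sum>k\<in>{0..Suc M}. (-1)^k * dk k (q * B (int k)))"
    by (simp add: nat_add_distrib)
  also have "\<dots> = (\<Sum>k\<in>{0..M}. (-1)^k * dk k (q * B (int k)))"
    using bnd_zero[OF M, of "int (Suc M)"] by simp
  finally show ?thesis using apply_adjoint[OF B M] by simp
qed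

lemma ker_adj_iff:
  assumes B: "is_diffop B"
  shows "q \<in> kernel der (adjoint der B) \<longleftrightarrow> ct (pm (cst q) B) = 0"
  by (simp add: kernel_def adj_ct[OF B])

lemma ct0_iff:
  assumes X: "is_diffop X"
  shows "ct X = 0 \<longleftrightarrow> (\<exists>Y. is_diffop Y \<and> X = pm Dop Y)"
proof
  assume "ct X = 0"
  hence "X = pm Dop (quot X)" using quot[OF X] by (simp add: cst_def)
  thus "\<exists>Y. is_diffop Y \<and> X = pm Dop Y" using quot(1)[OF X] by blast
next
  assume "\<exists>Y. is_diffop Y \<and> X = pm Dop Y"
  thus "ct X = 0" using ct_Dop by blast
qed

end

context dfld begin

definition WN :: "nat \<Rightarrow> (nat \<Rightarrow> 'a) \<Rightarrow> (nat \<Rightarrow> 'a) \<Rightarrow> 'a pdo" where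
  "WN n p q = (\<lambda>j. \<Sum>i<n. wn (p i) (q i) j)"

lemma wnl_eq: "wnl_form der E n p q = (\<lambda>j. E j + WN n p q j)"
  unfolding wnl_form_def WN_def wn_eq by (rule ext) (simp add: if_distrib cong: if_cong)

lemma pdo_wn[simp]: "is_pdo (wn p q)" by (simp add: wn_def)
lemma pdo_WN[simp]: "is_pdo (WN n p q)" unfolding WN_def by (rule pdo_sum) simp

lemma WN_nonneg: "j \<ge> 0 \<Longrightarrow> WN n p q j = 0"
  by (simp add: WN_def wn_eq)

lemma WN_neg: "WN n p q (- int k - 1) = (-1) ^ k * (\<Sum>i<n. p i * dk k (q i))"
proof -
  have "nat (- (- int k - 1) - 1) = k" by simp
  thus ?thesis by (simp add: WN_def wn_eq sum_distrib_left mult_ac)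
qed

lemma WN_zero: "WN n p (\<lambda>i. 0) = (\<lambda>_. 0)"
  by (simp add: WN_def wn_eq fun_eq_iff cong: if_cong)

lemma W1:
  assumes L: "lin_indep_C der n p" and W: "\<forall>j<0. WN n p r j = 0"
  shows "\<forall>i<n. r i = 0"
proof -
  have base: "(\<Sum>i<n. p i * dk k (r i)) = 0" for k
    using W[rule_format, of "- int k - 1"] by (simp add: WN_neg)
  have T: "(\<Sum>i<n. dk t (p i) * dk k (r i)) = 0" for t k
  proof (induction t arbitrary: k)
    case 0 then show ?case using base by simp
  next
    case (Suc t)
    have "der (\<Sum>i<n. dk t (p i) * dk k (r i)) =
        (\<Sum>i<n. dk (Suc t) (p i) * dk k (r i)) + (\<Sum>i<n. dk t (p i) * dk (Suc k) (r i))"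
      by (simp add: dsum dmult sum.distrib)
    then show ?case using Suc[of k] Suc[of "Suc k"] by simp
  qed
  show ?thesis
  proof (intro allI impI)
    fix i assume i: "i < n"
    show "r i = 0"
      by (rule ms_lemma[OF L _ i]) (use T[of _ 0] in \<open>simp add: mult.commute\<close>)
  qed
qed

lemma wn_mult:
  assumes B: "is_diffop B"
  shows "pm (wn p q) B = (\<lambda>j. p * quot (pm (cst q) B) j + wn p (ct (pm (cst q) B)) j)"
proof -
  define X where "X = pm (cst q) B"
  have X: "is_diffop X" using B by (simp add: X_def)
  have XY: "X = (\<lambda>j. pm Dop (quot X) j + cst (ct X) j)" using quot(2)[OF X] .
  have Y: "is_diffop (quot X)" using quot(1)[OF X] .
  have "pm (wn p q) B = pm (cst p) (pm (pm Dinv (cst q)) B)"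
    unfolding wn_def using B by (simp add: pm_assoc' diffop_pdo)
  also have "pm (pm Dinv (cst q)) B = pm Dinv X"
    unfolding X_def using B by (simp add: pm_assoc' diffop_pdo)
  also have "pm Dinv X = (\<lambda>j. pm Dinv (pm Dop (quot X)) j + pm Dinv (cst (ct X)) j)"
    by (subst XY) (rule pm_add_right', use Y in \<open>auto simp: diffop_pdo\<close>)
  also have "\<dots> = (\<lambda>j. quot X j + pm Dinv (cst (ct X)) j)"
    using Y by (simp add: DinvD diffop_pdo)
  finally have 1: "pm (wn p q) B = pm (cst p) (\<lambda>j. quot X j + pm Dinv (cst (ct X)) j)" .
  have 2: "pm (cst p) (\<lambda>j. quot X j + pm Dinv (cst (ct X)) j) = (\<lambda>j. p * (quot X j + pm Dinv (cst (ct X)) j))"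
    by (rule pm_cst_left) (use Y in \<open>simp add: diffop_pdo\<close>)
  have 3: "wn p (ct X) = (\<lambda>j. p * pm Dinv (cst (ct X)) j)" unfolding wn_def by (rule pm_cst_left) simp
  show ?thesis using 1 2 3 by (simp add: X_def distrib_left)
qed

lemma WN_mult:
  assumes B: "is_diffop B"
  shows "pm (WN n p q) B = (\<lambda>j. (\<Sum>i<n. p i * quot (pm (cst (q i)) B) j) + WN n p (\<lambda>i. ct (pm (cst (q i)) B)) j)"
proof -
  have "pm (WN n p q) B = (\<lambda>j. \<Sum>i<n. pm (wn (p i) (q i)) B j)"
    unfolding WN_def by (rule pm_sum_left') (use B in \<open>auto simp: diffop_pdo\<close>)
  thus ?thesis by (simp add: wn_mult[OF B] sum.distrib WN_def)
qed

lemma L_mult: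
  assumes E: "is_diffop E" and B: "is_diffop B"
  shows "pm (wnl_form der E n p q) B = (\<lambda>j. (pm E B j + (\<Sum>i<n. p i * quot (pm (cst (q i)) B) j))
      + WN n p (\<lambda>i. ct (pm (cst (q i)) B)) j)"
proof -
  have "pm (wnl_form der E n p q) B = (\<lambda>j. pm E B j + pm (WN n p q) B j)"
    unfolding wnl_eq by (rule pm_add_left') (use E B in \<open>auto simp: diffop_pdo\<close>)
  thus ?thesis by (simp add: WN_mult[OF B] add.assoc)
qed

lemma LB:
  assumes E: "is_diffop E" and B: "is_diffop B" and L: "lin_indep_C der n p"
  shows "is_diffop (pm (wnl_form der E n p q) B) \<longleftrightarrow> (\<forall>i<n. ct (pm (cst (q i)) B) = 0)"
proof -
  define D where "D = (\<lambda>j. pm E B j + (\<Sum>i<n. p i * quot (pm (cst (q i)) B) j))"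
  define r where "r = (\<lambda>i. ct (pm (cst (q i)) B))"
  have D: "is_diffop D" unfolding D_def
    by (rule diffop_add) (use E B quot(1) in \<open>auto intro!: diffop_sum diffop_smult\<close>)
  have eq: "pm (wnl_form der E n p q) B = (\<lambda>j. D j + WN n p r j)"
    unfolding D_def r_def by (rule L_mult[OF E B])
  show ?thesis
  proof
    assume d: "is_diffop (pm (wnl_form der E n p q) B)"
    have "\<forall>j<0. WN n p r j = 0"
    proof (intro allI impI)
      fix j :: int assume j: "j < 0"
      have "D j + WN n p r j = 0" using diffop_neg[OF d j] by (simp add: eq)
      thus "WN n p r j = 0" using diffop_neg[OF D j] by simp
    qed
    thus "\<forall>i<n. ct (pm (cst (q i)) B) = 0" using W1[OF L] by (simp add: r_def)
  next
    assume "\<forall>i<n. ct (pm (cst (q i)) B) = 0"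
    hence "r = (\<lambda>i. if i < n then 0 else r i)" by (auto simp: r_def)
    hence "WN n p r = WN n p (\<lambda>i. 0)" unfolding WN_def by (metis (no_types, lifting) lessThan_iff sum.cong)
    hence "WN n p r = (\<lambda>_. 0)" by (simp add: WN_zero)
    thus "is_diffop (pm (wnl_form der E n p q) B)" using D by (simp add: eq)
  qed
qed

end

context dfld begin

lemma nz_iff: "(\<exists>n. B n \<noteq> 0) \<longleftrightarrow> B \<noteq> (\<lambda>_. 0)" by auto

lemma ct_mono1: "ct (mono a 1) = - der a"
proof -
  have m: "mono a 1 = pm (cst a) Dop" by (simp add: pm_cst_left mono_def Dop_def fun_eq_iff)
  have b: "bnd Dop 1" by (rule bnd_Dop)
  have "ct (pm (cst a) Dop) = (\<Sum>k\<in>{0..nat (1 + 1)}. (-1)^k * dk k (a * Dop (int k)))"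
    by (rule ct_cmult[OF diffop_Dop b])
  also have "{0..nat (1 + 1)} = {0, 1, 2::nat}" by auto
  finally show ?thesis using m by (simp add: Dop_def)
qed

lemma dord_mono1: "a \<noteq> 0 \<Longrightarrow> dord (mono a 1) = 1"
  using dord_eq[of "mono a 1" 1] diffop_mono[of 1 a] by (simp add: mono_def)

lemma construct_ann:
  "\<exists>X. is_diffop X \<and> X \<noteq> (\<lambda>_. 0) \<and> dord X = k \<and> (\<forall>i<k. ct (pm (cst (q i)) X) = 0)"
proof (induction k)
  case 0
  have "dord (cst (1::'a)) = 0" using dord_eq[of "cst (1::'a)" 0] diffop_cst[of "1::'a"] by (simp add: cst_def)
  moreover have "cst (1::'a) \<noteq> (\<lambda>_. 0)" by (auto simp: cst_def fun_eq_iff)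
  ultimately show ?case by (intro exI[of _ "cst 1"]) simp
next
  case (Suc k)
  then obtain X where X: "is_diffop X" "X \<noteq> (\<lambda>_. 0)" "dord X = k" "\<forall>i<k. ct (pm (cst (q i)) X) = 0"
    by blast
  define r where "r = ct (pm (cst (q k)) X)"
  define c where "c = (if r = 0 then 1 else inverse r)"
  have c0: "c \<noteq> 0" by (simp add: c_def)
  define Z where "Z = mono c 1"
  have Z: "is_diffop Z" "Z \<noteq> (\<lambda>_. 0)" "dord Z = 1"
  proof -
    show "is_diffop Z" by (simp add: Z_def)
    show "Z \<noteq> (\<lambda>_. 0)" using c0 by (auto simp: Z_def mono_def fun_eq_iff)
    show "dord Z = 1" using c0 by (simp add: Z_def dord_mono1)
  qed
  define X' where "X' = pm X Z"
  have X': "is_diffop X'" "X' \<noteq> (\<lambda>_. 0)" "dord X' = Suc k"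
    using dord_pm[OF X(1,2) Z(1,2)] X Z by (auto simp: X'_def)
  have key: "pm (cst (q i)) X' = pm (pm (cst (q i)) X) Z" for i
    unfolding X'_def using X Z by (simp add: pm_assoc' diffop_pdo)
  have "ct (pm (cst (q i)) X') = 0" if i: "i < Suc k" for i
  proof -
    have Qi: "is_diffop (pm (cst (q i)) X)" using X by simp
    obtain Y where Y: "is_diffop Y" "pm (cst (q i)) X = (\<lambda>j. pm Dop Y j + cst (ct (pm (cst (q i)) X)) j)"
      using quot[OF Qi] by blast
    have "pm (cst (q i)) X' = (\<lambda>j. pm (pm Dop Y) Z j + pm (cst (ct (pm (cst (q i)) X))) Z j)"
      unfolding key by (subst Y(2)) (rule pm_add_left', use Y Z in \<open>auto simp: diffop_pdo\<close>)
    also have "pm (pm Dop Y) Z = pm Dop (pm Y Z)" using Y Z by (simp add: pm_assoc' diffop_pdo)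
    also have "pm (cst (ct (pm (cst (q i)) X))) Z = mono (ct (pm (cst (q i)) X) * c) 1"
      using Z by (simp add: pm_cst_left diffop_pdo Z_def mono_def fun_eq_iff)
    finally have e: "pm (cst (q i)) X' = (\<lambda>j. pm Dop (pm Y Z) j + mono (ct (pm (cst (q i)) X) * c) 1 j)" .
    have "ct (pm (cst (q i)) X') = ct (pm Dop (pm Y Z)) + ct (mono (ct (pm (cst (q i)) X) * c) 1)"
      unfolding e by (rule ct_add) (use Y Z in \<open>auto simp: diffop_pdo mono_def\<close>)
    also have "ct (pm Dop (pm Y Z)) = 0" using Y Z by (simp add: ct_Dop)
    also have "ct (mono (ct (pm (cst (q i)) X) * c) 1) = 0"
    proof (cases "i < k")
      case True then show ?thesis using X(4) by (simp add: ct_mono1)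
    next
      case False
      hence "i = k" using i by simp
      hence "ct (pm (cst (q i)) X) * c = (if r = 0 then 0 else 1)" by (simp add: r_def c_def)
      then show ?thesis by (simp add: ct_mono1)
    qed
    finally show ?thesis by simp
  qed
  thus ?case using X' by blast
qed

lemma inv_coeff_eq: "inv_coeff_D q = pm (cst (inverse q)) Dop"
  by (simp add: pm_cst_left inv_coeff_D_def Dop_def fun_eq_iff)

lemma moreover_part:
  assumes MR: "minimal_rfd der L A B" and E: "is_diffop E" and Ldef: "L = wnl_form der E n p q"
    and Lp: "lin_indep_C der n p" and Lq: "lin_indep_C der n q"
  shows "dord B = n \<and> is_right_lcm der B n (\<lambda>i. inv_coeff_D (q i)) \<and> kernel der (adjoint der B) = span_C der n q"
proof -
  have RF: "right_frac der L A B" and MIN: "\<And>A' B'. right_frac der L A' B' \<Longrightarrow>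
      \<exists>D. is_diffop D \<and> A' = pm A D \<and> B' = pm B D"
    using MR unfolding minimal_rfd_def by blast+
  have B: "is_diffop B" "B \<noteq> (\<lambda>_. 0)" and LB_A: "pm L B = A" and A: "is_diffop A"
    using RF unfolding right_frac_def nz_iff by blast+
  have LBiff: "\<And>X. is_diffop X \<Longrightarrow> is_diffop (pm L X) \<longleftrightarrow> (\<forall>i<n. ct (pm (cst (q i)) X) = 0)"
    unfolding Ldef by (rule LB[OF E _ Lp])
  have qB: "\<forall>i<n. ct (pm (cst (q i)) B) = 0" using LBiff[OF B(1)] A LB_A by simp
  have qker: "\<forall>i<n. apply_op der (adjoint der B) (q i) = 0" using qB by (simp add: adj_ct[OF B(1)])
  have AB: "is_diffop (adjoint der B)" "adjoint der B \<noteq> (\<lambda>_. 0)" "dord (adjoint der B) = dord B"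
    using adj_diffop[OF B(1)] dord_adj[OF B] by auto
  have n_le: "n \<le> dord B" using dim_bound[OF AB(1,2) Lq qker] AB(3) by simp
  obtain X where X: "is_diffop X" "X \<noteq> (\<lambda>_. 0)" "dord X = n" "\<forall>i<n. ct (pm (cst (q i)) X) = 0"
    using construct_ann by blast
  have LX: "is_diffop (pm L X)" using LBiff[OF X(1)] X(4) by simp
  have "right_frac der L (pm L X) X" using X LX by (simp add: right_frac_def nz_iff)
  then obtain D where D: "is_diffop D" "X = pm B D" using MIN by blast
  have Dnz: "D \<noteq> (\<lambda>_. 0)" using D X(2) by auto
  have "dord X = dord B + dord D" using dord_pm[OF B D(1) Dnz] D by simp
  hence dB: "dord B = n" using n_le X(3) by simp
  have ker: "kernel der (adjoint der B) = span_C der n q"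
    by (rule kernel_span[OF AB(1,2) Lq qker]) (simp add: AB(3) dB)
  have lcm: "is_right_lcm der B n (\<lambda>i. inv_coeff_D (q i))"
    unfolding is_right_lcm_def
  proof (intro conjI allI impI)
    show "is_diffop B" by (rule B(1))
    fix i assume i: "i < n"
    have qnz: "q i \<noteq> 0" using indep_nz[OF Lq i] .
    have Qi: "is_diffop (pm (cst (q i)) B)" using B by simp
    obtain Y where Y: "is_diffop Y" "pm (cst (q i)) B = pm Dop Y"
      using ct0_iff[OF Qi] qB i by blast
    have "pm (inv_coeff_D (q i)) Y = pm (cst (inverse (q i))) (pm Dop Y)"
      unfolding inv_coeff_eq using Y by (simp add: pm_assoc' diffop_pdo)
    also have "\<dots> = pm (pm (cst (inverse (q i))) (cst (q i))) B"
      unfolding Y(2)[symmetric] using B by (simp add: pm_assoc' diffop_pdo)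
    also have "\<dots> = B" using qnz B by (simp add: pm_cst_cst diffop_pdo)
    finally show "\<exists>X. is_diffop X \<and> B = pm (inv_coeff_D (q i)) X" using Y by metis
  next
    fix M assume M: "is_diffop M \<and> (\<forall>i<n. \<exists>Y. is_diffop Y \<and> M = pm (inv_coeff_D (q i)) Y)"
    show "\<exists>Z. is_diffop Z \<and> M = pm B Z"
    proof (cases "M = (\<lambda>_. 0)")
      case True then show ?thesis by (intro exI[of _ "\<lambda>_. 0"]) simp
    next
      case False
      have "\<forall>i<n. ct (pm (cst (q i)) M) = 0"
      proof (intro allI impI)
        fix i assume i: "i < n"
        have qnz: "q i \<noteq> 0" using indep_nz[OF Lq i] .
        obtain Y where Y: "is_diffop Y" "M = pm (inv_coeff_D (q i)) Y" using M i by blast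
        have "pm (cst (q i)) M = pm (cst (q i)) (pm (cst (inverse (q i))) (pm Dop Y))"
          unfolding Y(2) inv_coeff_eq using Y by (simp add: pm_assoc' diffop_pdo)
        also have "\<dots> = pm (pm (cst (q i)) (cst (inverse (q i)))) (pm Dop Y)"
          using Y by (simp add: pm_assoc' diffop_pdo)
        also have "\<dots> = pm Dop Y" using qnz Y by (simp add: pm_cst_cst diffop_pdo)
        finally show "ct (pm (cst (q i)) M) = 0" using Y by (simp add: ct_Dop)
      qed
      hence "is_diffop (pm L M)" using LBiff M by blast
      hence "right_frac der L (pm L M) M" using M False by (simp add: right_frac_def nz_iff)
      then show ?thesis using MIN by blast
    qed
  qed
  show ?thesis using dB lcm ker by blast
qed

end

context dfld begin

definition shD :: "'a pdo \<Rightarrow> 'a pdo" where "shD X = (\<lambda>j. if j < 0 then 0 else X (j + 1))"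

lemma shD_diffop[simp]: "is_diffop X \<Longrightarrow> is_diffop (shD X)"
proof -
  assume X: "is_diffop X"
  then obtain N where "bnd X N" using diffop_pdo is_pdo_bnd by blast
  hence "bnd (shD X) N" by (auto simp: bnd_def shD_def)
  thus ?thesis by (auto simp: is_diffop_def is_pdo_bnd shD_def)
qed

lemma A1:
  assumes X: "is_diffop X"
  shows "X = (\<lambda>j. pm (shD X) Dop j + cst (X 0) j)"
proof
  fix j
  have "pm (shD X) Dop j = shD X (j - 1)" using X by (simp add: pm_Dop_right diffop_pdo)
  thus "X j = pm (shD X) Dop j + cst (X 0) j"
    using diffop_neg[OF X, of j] by (auto simp: shD_def cst_def)
qed

lemma A2:
  assumes X: "is_diffop X"
  shows "pm X (pm Dinv (cst q)) = (\<lambda>j. pm (shD X) (cst q) j + wn (X 0) q j)"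
proof -
  have S: "is_diffop (shD X)" using X by simp
  have "pm X (pm Dinv (cst q)) = pm (\<lambda>j. pm (shD X) Dop j + cst (X 0) j) (pm Dinv (cst q))"
    using A1[OF X] by simp
  also have "\<dots> = (\<lambda>j. pm (pm (shD X) Dop) (pm Dinv (cst q)) j + pm (cst (X 0)) (pm Dinv (cst q)) j)"
    by (rule pm_add_left') (use S in \<open>auto simp: diffop_pdo\<close>)
  also have "pm (pm (shD X) Dop) (pm Dinv (cst q)) = pm (shD X) (cst q)"
    using S by (simp add: pm_assoc' diffop_pdo DDinv)
  finally show ?thesis by (simp add: wn_def)
qed

lemma A3:
  assumes B: "is_diffop B"
  shows "pm B (wn p q) = (\<lambda>j. pm (shD (pm B (cst p))) (cst q) j + wn (apply_op der B p) q j)"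
proof -
  have X: "is_diffop (pm B (cst p))" using B by simp
  have "pm B (wn p q) = pm (pm B (cst p)) (pm Dinv (cst q))"
    unfolding wn_def using B by (simp add: pm_assoc' diffop_pdo)
  also have "\<dots> = (\<lambda>j. pm (shD (pm B (cst p))) (cst q) j + wn (pm B (cst p) 0) q j)"
    by (rule A2[OF X])
  finally show ?thesis using B by (simp add: apply_eq_pm)
qed

lemma D_cst: "pm Dop (cst R) = (\<lambda>j. pm (cst R) Dop j + cst (der R) j)"
  unfolding pm_Dop_left[OF pdo_cst] pm_cst_left[OF pdo_Dop] by (auto simp: fun_eq_iff cst_def Dop_def)

lemma A4: "pm Dinv (pm (cst (der R)) Dinv) = (\<lambda>j. pm (cst R) Dinv j - pm Dinv (cst R) j)"
proof -
  have e: "cst (der R) = (\<lambda>j. pm Dop (cst R) j - pm (cst R) Dop j)"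
    using D_cst by (simp add: fun_eq_iff)
  have "pm (cst (der R)) Dinv = (\<lambda>j. pm (pm Dop (cst R)) Dinv j - pm (pm (cst R) Dop) Dinv j)"
    by (subst e) (rule pm_diff_left', auto)
  also have "pm (pm Dop (cst R)) Dinv = pm Dop (pm (cst R) Dinv)" by (simp add: pm_assoc')
  also have "pm (pm (cst R) Dop) Dinv = cst R" by (simp add: pm_assoc' pm_Dop_Dinv)
  finally have "pm Dinv (pm (cst (der R)) Dinv) = pm Dinv (\<lambda>j. pm Dop (pm (cst R) Dinv) j - cst R j)" by simp
  also have "\<dots> = (\<lambda>j. pm Dinv (pm Dop (pm (cst R) Dinv)) j - pm Dinv (cst R) j)"
    by (rule pm_diff_right') auto
  also have "pm Dinv (pm Dop (pm (cst R) Dinv)) = pm (cst R) Dinv" by (simp add: DinvD)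
  finally show ?thesis .
qed

lemma wn_cst_left: "pm (cst a) (wn p q) = wn (a * p) q"
  by (simp add: wn_def pm_assoc'[symmetric] pm_cst_cst)

lemma A5: "pm (wn p (der R)) (pm Dinv (cst s)) = (\<lambda>j. wn (p * R) s j - wn p (R * s) j)"
proof -
  have "pm (wn p (der R)) (pm Dinv (cst s)) = pm (cst p) (pm (pm Dinv (pm (cst (der R)) Dinv)) (cst s))"
    by (simp add: wn_def pm_assoc')
  also have "\<dots> = pm (cst p) (\<lambda>j. pm (pm (cst R) Dinv) (cst s) j - pm (pm Dinv (cst R)) (cst s) j)"
    unfolding A4 by (subst pm_diff_left') auto
  also have "\<dots> = (\<lambda>j. pm (cst p) (pm (pm (cst R) Dinv) (cst s)) j - pm (cst p) (pm (pm Dinv (cst R)) (cst s)) j)"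
    by (rule pm_diff_right') auto
  also have "pm (cst p) (pm (pm (cst R) Dinv) (cst s)) = wn (p * R) s"
    by (simp add: wn_def pm_assoc'[symmetric] pm_cst_cst)
  also have "pm (cst p) (pm (pm Dinv (cst R)) (cst s)) = wn p (R * s)"
    by (simp add: wn_def pm_assoc' pm_cst_cst)
  finally show ?thesis .
qed

lemma A7:
  assumes E: "is_diffop E"
  shows "pm (cst f) (pm Dinv (pm (cst g) E)) = (\<lambda>j. f * quot (pm (cst g) E) j + wn f (ct (pm (cst g) E)) j)"
proof -
  define F where "F = pm (cst g) E"
  have F: "is_diffop F" using E by (simp add: F_def)
  have Q: "is_diffop (quot F)" using quot(1)[OF F] .
  have "pm Dinv F = pm Dinv (\<lambda>j. pm Dop (quot F) j + cst (ct F) j)" using quot(2)[OF F] by simp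
  also have "\<dots> = (\<lambda>j. pm Dinv (pm Dop (quot F)) j + pm Dinv (cst (ct F)) j)"
    by (rule pm_add_right') (use Q in \<open>auto simp: diffop_pdo\<close>)
  also have "\<dots> = (\<lambda>j. quot F j + pm Dinv (cst (ct F)) j)" using Q by (simp add: DinvD diffop_pdo)
  finally have e: "pm Dinv F = (\<lambda>j. quot F j + pm Dinv (cst (ct F)) j)" .
  have "pm (cst f) (\<lambda>j. quot F j + pm Dinv (cst (ct F)) j) = (\<lambda>j. f * (quot F j + pm Dinv (cst (ct F)) j))"
    by (rule pm_cst_left) (use Q in \<open>simp add: diffop_pdo\<close>)
  moreover have "wn f (ct F) = (\<lambda>j. f * pm Dinv (cst (ct F)) j)" unfolding wn_def by (rule pm_cst_left) simp
  ultimately show ?thesis using e by (simp add: F_def distrib_left)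
qed

lemma A8: "pm (cst f) (pm Dinv (wn (der R) r)) = (\<lambda>j. wn (f * R) r j - wn f (R * r) j)"
proof -
  have "pm (cst f) (pm Dinv (wn (der R) r)) = pm (cst f) (pm (pm Dinv (pm (cst (der R)) Dinv)) (cst r))"
    by (simp add: wn_def pm_assoc')
  also have "\<dots> = pm (cst f) (\<lambda>j. pm (pm (cst R) Dinv) (cst r) j - pm (pm Dinv (cst R)) (cst r) j)"
    unfolding A4 by (subst pm_diff_left') auto
  also have "\<dots> = (\<lambda>j. pm (cst f) (pm (pm (cst R) Dinv) (cst r)) j - pm (cst f) (pm (pm Dinv (cst R)) (cst r)) j)"
    by (rule pm_diff_right') auto
  also have "pm (cst f) (pm (pm (cst R) Dinv) (cst r)) = wn (f * R) r"
    by (simp add: wn_def pm_assoc'[symmetric] pm_cst_cst)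
  also have "pm (cst f) (pm (pm Dinv (cst R)) (cst r)) = wn f (R * r)"
    by (simp add: wn_def pm_assoc' pm_cst_cst)
  finally show ?thesis .
qed

end

lemma sum_skip:
  assumes j: "j < Suc n"
  shows "(\<Sum>i<Suc n. f i) = f j + (\<Sum>i<n. f (if i < j then i else Suc i))"
proof -
  define \<tau> where "\<tau> i = (if i < j then i else Suc i)" for i
  have inj: "inj_on \<tau> {..<n}" by (auto simp: inj_on_def \<tau>_def split: if_splits)
  have im: "\<tau> ` {..<n} = {..<Suc n} - {j}"
  proof
    show "\<tau> ` {..<n} \<subseteq> {..<Suc n} - {j}" using j by (auto simp: \<tau>_def)
    show "{..<Suc n} - {j} \<subseteq> \<tau> ` {..<n}"
    proof
      fix x assume x: "x \<in> {..<Suc n} - {j}"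
      show "x \<in> \<tau> ` {..<n}"
      proof (cases "x < j")
        case True
        hence "x = \<tau> x" "x < n" using j by (auto simp: \<tau>_def)
        thus ?thesis by blast
      next
        case False
        hence "x = \<tau> (x - 1)" "x - 1 < n" using x by (auto simp: \<tau>_def)
        thus ?thesis by blast
      qed
    qed
  qed
  have "(\<Sum>i<Suc n. f i) = f j + (\<Sum>i\<in>{..<Suc n} - {j}. f i)"
    by (rule sum.remove) (use j in auto)
  also have "(\<Sum>i\<in>{..<Suc n} - {j}. f i) = (\<Sum>i<n. f (\<tau> i))"
    unfolding im[symmetric] by (rule sum.reindex[OF inj, unfolded comp_def])
  finally show ?thesis by (simp add: \<tau>_def)
qed

context dfld begin

definition csub :: "'a set \<Rightarrow> bool" where
  "csub V \<longleftrightarrow> 0 \<in> V \<and> (\<forall>x\<in>V. \<forall>y\<in>V. \<forall>c. der c = 0 \<longrightarrow> x + c * y \<in> V)"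

lemma csub_UNIV[simp]: "csub UNIV" by (simp add: csub_def)

lemma csub_span: "csub (span_C der n f)"
  unfolding csub_def
proof (intro conjI ballI allI impI)
  show "0 \<in> span_C der n f" unfolding span_C_def by (intro CollectI exI[of _ "\<lambda>_. 0"]) simp
  fix x y and c :: 'a assume x: "x \<in> span_C der n f" and y: "y \<in> span_C der n f" and c: "der c = 0"
  obtain a where a: "x = (\<Sum>i<n. a i * f i)" "\<forall>i<n. der (a i) = 0" using x by (auto simp: span_C_def)
  obtain b where b: "y = (\<Sum>i<n. b i * f i)" "\<forall>i<n. der (b i) = 0" using y by (auto simp: span_C_def)
  have "x + c * y = (\<Sum>i<n. (a i + c * b i) * f i)"
    by (simp add: a b sum.distrib sum_distrib_left distrib_right mult.assoc)
  moreover have "\<forall>i<n. der (a i + c * b i) = 0" using a b c by (simp add: dadd dmult)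
  ultimately show "x + c * y \<in> span_C der n f" unfolding span_C_def
    by (intro CollectI exI[of _ "\<lambda>i. a i + c * b i"]) auto
qed

lemma csub_smult: "csub V \<Longrightarrow> x \<in> V \<Longrightarrow> der c = 0 \<Longrightarrow> c * x \<in> V"
proof -
  assume V: "csub V" and x: "x \<in> V" and c: "der c = 0"
  have "0 \<in> V" "\<And>x y c. x \<in> V \<Longrightarrow> y \<in> V \<Longrightarrow> der c = 0 \<Longrightarrow> x + c * y \<in> V"
    using V unfolding csub_def by blast+
  hence "0 + c * x \<in> V" using x c by blast
  thus ?thesis by simp
qed

lemma csub_neg: "csub V \<Longrightarrow> x \<in> V \<Longrightarrow> - x \<in> V"
  using csub_smult[of V x "-1"] by simp

lemma csub_add: "csub V \<Longrightarrow> x \<in> V \<Longrightarrow> y \<in> V \<Longrightarrow> x + y \<in> V"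
proof -
  assume V: "csub V" and x: "x \<in> V" and y: "y \<in> V"
  have h: "\<And>x y c. x \<in> V \<Longrightarrow> y \<in> V \<Longrightarrow> der c = 0 \<Longrightarrow> x + c * y \<in> V"
    using V unfolding csub_def by blast
  have "x + 1 * y \<in> V" by (rule h) (use x y in simp_all)
  thus ?thesis by simp
qed

lemma WN_eq_S:
  assumes "\<And>k. (\<Sum>i<n. p i * dk k (q i)) = (\<Sum>i<m. p' i * dk k (q' i))"
  shows "WN n p q = WN m p' q'"
proof
  fix j :: int
  show "WN n p q j = WN m p' q' j"
  proof (cases "j < 0")
    case True
    define k where "k = nat (- j - 1)"
    have j: "j = - int k - 1" using True by (simp add: k_def)
    show ?thesis unfolding j WN_neg assms ..
  next
    case False then show ?thesis by (simp add: WN_nonneg)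
  qed
qed

lemma reduce:
  assumes Vp: "csub Vp" and Vq: "csub Vq"
  shows "(\<forall>i<n. p i \<in> Vp \<and> q i \<in> Vq) \<Longrightarrow> \<exists>m p' q'. WN n p q = WN m p' q' \<and> lin_indep_C der m p'
      \<and> lin_indep_C der m q' \<and> (\<forall>i<m. p' i \<in> Vp \<and> q' i \<in> Vq)"
proof (induction n arbitrary: p q)
  case 0
  show ?case by (intro exI[of _ 0] exI[of _ p] exI[of _ q]) (simp add: lin_indep_C_def)
next
  case (Suc n)
  show ?case
  proof (cases "lin_indep_C der (Suc n) p \<and> lin_indep_C der (Suc n) q")
    case True then show ?thesis using Suc.prems by blast
  next
    case False
    define \<tau> where "\<tau> j i = (if i < j then i else Suc i)" for i j :: nat
    show ?thesis
    proof (cases "lin_indep_C der (Suc n) q")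
      case True
      hence np: "\<not> lin_indep_C der (Suc n) p" using False by blast
      then obtain c where c: "\<forall>i<Suc n. der (c i) = 0" "(\<Sum>i<Suc n. c i * p i) = 0" "\<exists>i<Suc n. c i \<noteq> 0"
        unfolding lin_indep_C_def by blast
      then obtain j where j: "j < Suc n" "c j \<noteq> 0" by blast
      define d where "d i = - c (\<tau> j i) / c j" for i
      have d: "der (d i) = 0" if "i < n" for i
        using c(1) j that by (auto simp: d_def \<tau>_def intro!: dconst_div)
      have pj: "p j = (\<Sum>i<n. d i * p (\<tau> j i))"
      proof -
        have "c j * p j + (\<Sum>i<n. c (\<tau> j i) * p (\<tau> j i)) = 0"
          using c(2) sum_skip[OF j(1), of "\<lambda>i. c i * p i"] by (simp add: \<tau>_def)
        hence "p j = - (\<Sum>i<n. c (\<tau> j i) * p (\<tau> j i)) / c j" using j(2)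
          by (simp add: field_simps eq_neg_iff_add_eq_0)
        thus ?thesis by (simp add: d_def sum_divide_distrib sum_negf[symmetric])
      qed
      define p' where "p' i = p (\<tau> j i)" for i
      define q' where "q' i = q (\<tau> j i) + d i * q j" for i
      have eq: "WN (Suc n) p q = WN n p' q'"
      proof (rule WN_eq_S)
        fix k
        have "(\<Sum>i<Suc n. p i * dk k (q i)) = p j * dk k (q j) + (\<Sum>i<n. p (\<tau> j i) * dk k (q (\<tau> j i)))"
          using sum_skip[OF j(1), of "\<lambda>i. p i * dk k (q i)"] by (simp add: \<tau>_def)
        also have "p j * dk k (q j) = (\<Sum>i<n. d i * p (\<tau> j i) * dk k (q j))"
          by (simp add: pj sum_distrib_right)
        finally show "(\<Sum>i<Suc n. p i * dk k (q i)) = (\<Sum>i<n. p' i * dk k (q' i))"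
          using d by (simp add: p'_def q'_def dk_add dk_const_mult sum.distrib[symmetric] algebra_simps)
      qed
      have inV: "\<forall>i<n. p' i \<in> Vp \<and> q' i \<in> Vq"
      proof (intro allI impI conjI)
        fix i assume i: "i < n"
        have ti: "\<tau> j i < Suc n" using i by (simp add: \<tau>_def)
        show "p' i \<in> Vp" using Suc.prems ti by (simp add: p'_def)
        show "q' i \<in> Vq" unfolding q'_def
          using Vq Suc.prems ti j(1) d[OF i] unfolding csub_def by blast
      qed
      show ?thesis using Suc.IH[OF inV] eq by metis
    next
      case False
      then obtain c where c: "\<forall>i<Suc n. der (c i) = 0" "(\<Sum>i<Suc n. c i * q i) = 0" "\<exists>i<Suc n. c i \<noteq> 0"
        unfolding lin_indep_C_def by blast
      then obtain j where j: "j < Suc n" "c j \<noteq> 0" by blast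
      define d where "d i = - c (\<tau> j i) / c j" for i
      have d: "der (d i) = 0" if "i < n" for i
        using c(1) j that by (auto simp: d_def \<tau>_def intro!: dconst_div)
      have qj: "q j = (\<Sum>i<n. d i * q (\<tau> j i))"
      proof -
        have "c j * q j + (\<Sum>i<n. c (\<tau> j i) * q (\<tau> j i)) = 0"
          using c(2) sum_skip[OF j(1), of "\<lambda>i. c i * q i"] by (simp add: \<tau>_def)
        hence "q j = - (\<Sum>i<n. c (\<tau> j i) * q (\<tau> j i)) / c j" using j(2)
          by (simp add: field_simps eq_neg_iff_add_eq_0)
        thus ?thesis by (simp add: d_def sum_divide_distrib sum_negf[symmetric])
      qed
      define p' where "p' i = p (\<tau> j i) + d i * p j" for i
      define q' where "q' i = q (\<tau> j i)" for i
      have eq: "WN (Suc n) p q = WN n p' q'"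
      proof (rule WN_eq_S)
        fix k
        have "(\<Sum>i<Suc n. p i * dk k (q i)) = p j * dk k (q j) + (\<Sum>i<n. p (\<tau> j i) * dk k (q (\<tau> j i)))"
          using sum_skip[OF j(1), of "\<lambda>i. p i * dk k (q i)"] by (simp add: \<tau>_def)
        also have "p j * dk k (q j) = (\<Sum>i<n. d i * p j * dk k (q (\<tau> j i)))"
          using d by (simp add: qj dk_sum dk_const_mult sum_distrib_left mult_ac)
        finally show "(\<Sum>i<Suc n. p i * dk k (q i)) = (\<Sum>i<n. p' i * dk k (q' i))"
          by (simp add: p'_def q'_def sum.distrib[symmetric] algebra_simps)
      qed
      have inV: "\<forall>i<n. p' i \<in> Vp \<and> q' i \<in> Vq"
      proof (intro allI impI conjI)
        fix i assume i: "i < n"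
        have ti: "\<tau> j i < Suc n" using i by (simp add: \<tau>_def)
        show "q' i \<in> Vq" using Suc.prems ti by (simp add: q'_def)
        show "p' i \<in> Vp" unfolding p'_def
          using Vp Suc.prems ti j(1) d[OF i] unfolding csub_def by blast
      qed
      show ?thesis using Suc.IH[OF inV] eq by metis
    qed
  qed
qed

end

context dfld begin

definition is_wnl :: "'a pdo \<Rightarrow> 'a set \<Rightarrow> 'a set \<Rightarrow> bool" where
  "is_wnl X Vp Vq \<longleftrightarrow> (\<exists>E m p q. is_diffop E \<and> X = (\<lambda>j. E j + WN m p q j) \<and> (\<forall>i<m. p i \<in> Vp \<and> q i \<in> Vq))"

lemma WN_append:
  "WN m p q j + WN m' p' q' j =
   WN (m + m') (\<lambda>i. if i < m then p i else p' (i - m)) (\<lambda>i. if i < m then q i else q' (i - m)) j"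
proof (induction m')
  case 0
  have "WN m p q j = WN m (\<lambda>i. if i < m then p i else p' (i - m)) (\<lambda>i. if i < m then q i else q' (i - m)) j"
    unfolding WN_def by (rule sum.cong) auto
  then show ?case by (simp add: WN_def)
next
  case (Suc m')
  have e1: "WN (Suc m') p' q' j = WN m' p' q' j + wn (p' m') (q' m') j" by (simp add: WN_def)
  have e2: "WN (m + Suc m') (\<lambda>i. if i < m then p i else p' (i - m)) (\<lambda>i. if i < m then q i else q' (i - m)) j
    = WN (m + m') (\<lambda>i. if i < m then p i else p' (i - m)) (\<lambda>i. if i < m then q i else q' (i - m)) j
      + wn (p' m') (q' m') j" by (simp add: WN_def)
  show ?case unfolding e1 e2 Suc.IH[symmetric] by (simp add: add.assoc)
qed

lemma wnl_add:
  assumes "is_wnl X Vp Vq" "is_wnl Y Vp Vq"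
  shows "is_wnl (\<lambda>j. X j + Y j) Vp Vq"
proof -
  obtain E m p q where X: "is_diffop E" "X = (\<lambda>j. E j + WN m p q j)" "\<forall>i<m. p i \<in> Vp \<and> q i \<in> Vq"
    using assms(1) unfolding is_wnl_def by blast
  obtain E' m' p' q' where Y: "is_diffop E'" "Y = (\<lambda>j. E' j + WN m' p' q' j)" "\<forall>i<m'. p' i \<in> Vp \<and> q' i \<in> Vq"
    using assms(2) unfolding is_wnl_def by blast
  define P where "P = (\<lambda>i. if i < m then p i else p' (i - m))"
  define Q where "Q = (\<lambda>i. if i < m then q i else q' (i - m))"
  have "(\<lambda>j. X j + Y j) = (\<lambda>j. (\<lambda>j. E j + E' j) j + WN (m + m') P Q j)"
    using WN_append[of m p q _ m' p' q'] by (auto simp: X(2) Y(2) P_def Q_def fun_eq_iff algebra_simps)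
  moreover have "\<forall>i<m + m'. P i \<in> Vp \<and> Q i \<in> Vq" using X(3) Y(3) by (auto simp: P_def Q_def)
  ultimately show ?thesis unfolding is_wnl_def using X(1) Y(1)
    by (intro exI[of _ "\<lambda>j. E j + E' j"] exI[of _ "m + m'"] exI[of _ P] exI[of _ Q]) auto
qed

lemma wnl_diffop: "is_diffop E \<Longrightarrow> is_wnl E Vp Vq"
  unfolding is_wnl_def by (intro exI[of _ E] exI[of _ 0]) (simp add: WN_def)

lemma wnl_wn: "p \<in> Vp \<Longrightarrow> q \<in> Vq \<Longrightarrow> is_wnl (wn p q) Vp Vq"
  unfolding is_wnl_def
  by (intro exI[of _ "\<lambda>_. 0"] exI[of _ 1] exI[of _ "\<lambda>_. p"] exI[of _ "\<lambda>_. q"]) (simp add: WN_def)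

lemma WN_neg_op: "WN m (\<lambda>i. - p i) q j = - WN m p q j"
  by (simp add: WN_def wn_eq sum_negf[symmetric] if_distrib cong: if_cong)

lemma wnl_neg:
  assumes "csub Vp" "is_wnl X Vp Vq"
  shows "is_wnl (\<lambda>j. - X j) Vp Vq"
proof -
  obtain E m p q where X: "is_diffop E" "X = (\<lambda>j. E j + WN m p q j)" "\<forall>i<m. p i \<in> Vp \<and> q i \<in> Vq"
    using assms(2) unfolding is_wnl_def by blast
  have "(\<lambda>j. - X j) = (\<lambda>j. (\<lambda>j. - E j) j + (\<lambda>j. - WN m p q j) j)" by (simp add: X(2))
  also have "\<dots> = (\<lambda>j. (\<lambda>j. - E j) j + WN m (\<lambda>i. - p i) q j)" by (simp add: WN_neg_op)
  finally show ?thesis unfolding is_wnl_def using X assms(1) csub_neg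
    by (intro exI[of _ "\<lambda>j. - E j"] exI[of _ m] exI[of _ "\<lambda>i. - p i"] exI[of _ q]) auto
qed

lemma wnl_diff:
  assumes "csub Vp" "is_wnl X Vp Vq" "is_wnl Y Vp Vq"
  shows "is_wnl (\<lambda>j. X j - Y j) Vp Vq"
  using wnl_add[OF assms(2) wnl_neg[OF assms(1,3)]] by simp

lemma wnl_sum:
  assumes "finite S" "\<And>i. i \<in> S \<Longrightarrow> is_wnl (f i) Vp Vq"
  shows "is_wnl (\<lambda>j. \<Sum>i\<in>S. f i j) Vp Vq"
  using assms
proof (induction S rule: finite_induct)
  case empty then show ?case using wnl_diffop[of "\<lambda>_. 0"] by simp
next
  case (insert x F)
  then show ?case using wnl_add[of "f x" Vp Vq "\<lambda>j. \<Sum>i\<in>F. f i j"] by simp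
qed

lemma wnl_pdo: "is_wnl X Vp Vq \<Longrightarrow> is_pdo X"
  unfolding is_wnl_def by (auto simp: diffop_pdo)

lemma wnl_form_of: "is_wnl X Vp Vq \<Longrightarrow> \<exists>E m p q. is_diffop E \<and> X = wnl_form der E m p q \<and> (\<forall>i<m. p i \<in> Vp \<and> q i \<in> Vq)"
  unfolding is_wnl_def wnl_eq by blast

lemma dquot: "b \<noteq> 0 \<Longrightarrow> b * der (a / b) = der a - der b / b * a"
proof -
  assume b: "b \<noteq> 0"
  have h: "der (a / b) = der a * inverse b + a * (- der b * inverse b * inverse b)"
    by (simp add: divide_inverse dmult dinverse[OF b])
  have "b * der (a / b) = b * (der a * inverse b + a * (- der b * inverse b * inverse b))"
    by (simp only: h)
  also have "\<dots> = der a * (b * inverse b) - der b * inverse b * a * (b * inverse b)"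
    by (simp add: algebra_simps)
  also have "\<dots> = der a - der b / b * a" using b by (simp add: divide_inverse)
  finally show ?thesis .
qed

lemma IND:
  assumes L: "lin_indep_C der (Suc n) g" and g0: "g 0 \<noteq> 0"
  shows "lin_indep_C der n (\<lambda>i. der (g (Suc i) / g 0))"
  unfolding lin_indep_C_def
proof (rule allI, rule impI)
  fix c assume c: "(\<forall>i<n. der (c i) = 0) \<and> (\<Sum>i<n. c i * der (g (Suc i) / g 0)) = 0"
  have cc: "\<And>i. i < n \<Longrightarrow> der (c i) = 0" using c by blast
  define e where "e = (\<Sum>i<n. c i * (g (Suc i) / g 0))"
  have "der e = (\<Sum>i<n. c i * der (g (Suc i) / g 0))"
    unfolding e_def dsum by (rule sum.cong[OF refl]) (rule dconst_mult, simp add: cc)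
  hence de: "der e = 0" using c by simp
  define c' where "c' i = (if i = 0 then - e else c (i - 1))" for i
  have "(\<Sum>i<Suc n. c' i * g i) = - e * g 0 + (\<Sum>i<n. c i * g (Suc i))"
    by (subst sum.lessThan_Suc_shift) (simp add: c'_def)
  also have "(\<Sum>i<n. c i * g (Suc i)) = e * g 0"
    unfolding e_def sum_distrib_right by (rule sum.cong[OF refl]) (use g0 in simp)
  finally have sz: "(\<Sum>i<Suc n. c' i * g i) = 0" by simp
  have dc': "\<forall>i<Suc n. der (c' i) = 0"
  proof (intro allI impI)
    fix i assume i: "i < Suc n"
    show "der (c' i) = 0"
    proof (cases i)
      case 0 then show ?thesis using de by (simp add: c'_def)
    next
      case (Suc i') then show ?thesis using cc i by (simp add: c'_def)
    qed
  qed
  have z: "\<forall>i<Suc n. c' i = 0" using L sz dc' unfolding lin_indep_C_def by blast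
  show "\<forall>i<n. c i = 0"
  proof (intro allI impI)
    fix i assume "i < n"
    hence "c' (Suc i) = 0" using z by simp
    thus "c i = 0" by (simp add: c'_def)
  qed
qed

lemma indep_mult:
  assumes L: "lin_indep_C der n h" and f: "f \<noteq> 0"
  shows "lin_indep_C der n (\<lambda>i. f * h i)"
  unfolding lin_indep_C_def
proof (rule allI, rule impI)
  fix c assume c: "(\<forall>i<n. der (c i) = 0) \<and> (\<Sum>i<n. c i * (f * h i)) = 0"
  have "(\<Sum>i<n. c i * (f * h i)) = f * (\<Sum>i<n. c i * h i)" by (simp add: sum_distrib_left mult_ac)
  hence "(\<Sum>i<n. c i * h i) = 0" using c f by simp
  thus "\<forall>i<n. c i = 0" using L c unfolding lin_indep_C_def by blast
qed

lemma span_elem0: "g 0 \<in> span_C der (Suc n) g"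
proof -
  have "(\<Sum>i<Suc n. (if i = 0 then 1 else 0) * g i) = (\<Sum>i<Suc n. if i = 0 then g i else 0)"
    by (rule sum.cong) auto
  also have "\<dots> = g 0" by (simp add: sum.delta)
  finally have "g 0 = (\<Sum>i<Suc n. (if i = 0 then 1 else 0) * g i)" by simp
  thus ?thesis unfolding span_C_def by (intro CollectI exI[of _ "\<lambda>i. if i = 0 then 1 else 0"]) auto
qed

lemma span_shift:
  assumes R: "R \<in> span_C der n (\<lambda>i. g (Suc i) / g 0)" and g0: "g 0 \<noteq> 0"
  shows "R * g 0 \<in> span_C der (Suc n) g"
proof -
  obtain c where c: "R = (\<Sum>i<n. c i * (g (Suc i) / g 0))" "\<forall>i<n. der (c i) = 0"
    using R by (auto simp: span_C_def)
  define c' where "c' i = (if i = 0 then 0 else c (i - 1))" for i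
  have "R * g 0 = (\<Sum>i<n. c i * g (Suc i))"
    unfolding c(1) sum_distrib_right by (rule sum.cong[OF refl]) (use g0 in simp)
  also have "\<dots> = (\<Sum>i<Suc n. c' i * g i)"
    by (subst sum.lessThan_Suc_shift) (simp add: c'_def)
  finally show ?thesis unfolding span_C_def using c(2)
    by (intro CollectI exI[of _ c']) (auto simp: c'_def)
qed

lemma span_der:
  assumes r: "r \<in> span_C der n (\<lambda>i. der (s i))"
  shows "\<exists>R \<in> span_C der n s. r = der R"
proof -
  obtain c where c: "r = (\<Sum>i<n. c i * der (s i))" "\<forall>i<n. der (c i) = 0"
    using r by (auto simp: span_C_def)
  have "der (\<Sum>i<n. c i * s i) = r"
    unfolding c(1) dsum by (rule sum.cong[OF refl]) (use c(2) in \<open>simp add: dconst_mult\<close>)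
  moreover have "(\<Sum>i<n. c i * s i) \<in> span_C der n s" unfolding span_C_def using c(2) by blast
  ultimately show ?thesis by metis
qed

lemma span_divide:
  assumes x: "x \<in> span_C der n (\<lambda>i. f * h i)" and that: "f \<noteq> 0"
  shows "inverse f * x \<in> span_C der n h"
proof -
  obtain c where c: "x = (\<Sum>i<n. c i * (f * h i))" "\<forall>i<n. der (c i) = 0"
    using x by (auto simp: span_C_def)
  have "inverse f * x = (\<Sum>i<n. c i * h i)"
    unfolding c(1) sum_distrib_left by (rule sum.cong[OF refl]) (use that in \<open>simp add: mult_ac\<close>)
  thus ?thesis unfolding span_C_def using c(2) by blast
qed

end

context dfld begin

lemma dord_cst: "a \<noteq> 0 \<Longrightarrow> dord (cst a) = 0"
  using dord_eq[of "cst a" 0] diffop_cst[of a] by (simp add: cst_def)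

lemma dord_Dop: "dord Dop = 1"
  using dord_eq[of Dop 1] diffop_Dop by (simp add: Dop_def)

lemma Dop_nz: "Dop \<noteq> (\<lambda>_. 0)" by (auto simp: Dop_def fun_eq_iff)
lemma cst_nz: "a \<noteq> 0 \<Longrightarrow> cst a \<noteq> (\<lambda>_. 0)" by (auto simp: cst_def fun_eq_iff)

lemma dord0_cst:
  assumes B: "is_diffop B" "B \<noteq> (\<lambda>_. 0)" "dord B = 0"
  shows "B = cst (B 0)" "B 0 \<noteq> 0"
proof -
  show "B 0 \<noteq> 0" using dord_prop(1)[OF B(1,2)] B(3) by simp
  show "B = cst (B 0)"
  proof
    fix j
    show "B j = cst (B 0) j"
    proof (cases "j < 0")
      case True then show ?thesis using diffop_neg[OF B(1) True] by (simp add: cst_def)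
    next
      case False then show ?thesis using dord_prop(2)[OF B(1,2), of j] B(3) by (cases "j = 0") (auto simp: cst_def)
    qed
  qed
qed

lemma wnl_WN:
  assumes "\<forall>i<m. is_wnl (wn (p i) (r i)) Vp Vq"
  shows "is_wnl (WN m p r) Vp Vq"
  unfolding WN_def by (rule wnl_sum) (use assms in auto)

lemma C1:
  "is_diffop B \<Longrightarrow> B \<noteq> (\<lambda>_. 0) \<Longrightarrow> dord B = n \<Longrightarrow> lin_indep_C der n \<psi> \<Longrightarrow>
    (\<forall>i<n. ct (pm (cst (\<psi> i)) B) = 0) \<Longrightarrow> \<exists>N. is_wnl N UNIV (span_C der n \<psi>) \<and> pm N B = cst 1"
proof (induction n arbitrary: B \<psi>)
  case 0
  have b: "B = cst (B 0)" "B 0 \<noteq> 0" using dord0_cst 0 by blast+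
  obtain c where c: "B = cst c" "c \<noteq> 0" using b by blast
  have "pm (cst (inverse c)) B = cst 1" unfolding c(1) using c(2) by (simp add: pm_cst_cst)
  thus ?case using wnl_diffop[OF diffop_cst] by blast
next
  case (Suc n)
  note B = Suc.prems(1,2)
  define \<psi>0 where "\<psi>0 = \<psi> 0"
  have p0: "\<psi>0 \<noteq> 0" using indep_nz[OF Suc.prems(4)] by (simp add: \<psi>0_def)
  define X where "X = pm (cst \<psi>0) B"
  have Xd: "is_diffop X" using B by (simp add: X_def)
  have "ct X = 0" using Suc.prems(5) by (simp add: X_def \<psi>0_def)
  then obtain Y where Y: "is_diffop Y" "X = pm Dop Y" using ct0_iff[OF Xd] by blast
  have Xnz: "X \<noteq> (\<lambda>_. 0)" using pm_nonzero[of "cst \<psi>0" B] B p0 by (simp add: X_def diffop_pdo cst_nz)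
  have Ynz: "Y \<noteq> (\<lambda>_. 0)" using Xnz Y by auto
  have "dord X = Suc n" using dord_pm(1)[OF diffop_cst cst_nz[OF p0] B] Suc.prems(3) p0
    by (simp add: X_def dord_cst)
  moreover have "dord X = 1 + dord Y" using dord_pm(1)[OF diffop_Dop Dop_nz Y(1) Ynz] Y(2) by (simp add: dord_Dop)
  ultimately have dY: "dord Y = n" by simp
  define s where "s i = \<psi> (Suc i) / \<psi>0" for i
  have ctY: "\<forall>i<n. ct (pm (cst (der (s i))) Y) = 0"
  proof (intro allI impI)
    fix i assume i: "i < n"
    have Zi: "is_diffop (pm (cst (\<psi> (Suc i))) B)" using B by simp
    obtain Z where Z: "is_diffop Z" "pm (cst (\<psi> (Suc i))) B = pm Dop Z"
      using ct0_iff[OF Zi] Suc.prems(5) i by auto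
    have e1: "pm (cst (s i)) X = pm (cst (\<psi> (Suc i))) B"
      unfolding X_def using B p0 by (simp add: pm_assoc'[symmetric] diffop_pdo pm_cst_cst s_def)
    have "pm (cst (s i)) (pm Dop Y) = pm (pm (cst (s i)) Dop) Y" using Y by (simp add: pm_assoc' diffop_pdo)
    also have "pm (cst (s i)) Dop = (\<lambda>j. pm Dop (cst (s i)) j - cst (der (s i)) j)"
      using D_cst[of "s i"] by (simp add: fun_eq_iff)
    also have "pm \<dots> Y = (\<lambda>j. pm (pm Dop (cst (s i))) Y j - pm (cst (der (s i))) Y j)"
      by (rule pm_diff_left') (use Y in \<open>auto simp: diffop_pdo\<close>)
    also have "pm (pm Dop (cst (s i))) Y = pm Dop (pm (cst (s i)) Y)" using Y by (simp add: pm_assoc' diffop_pdo)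
    finally have e2: "pm (cst (s i)) (pm Dop Y) = (\<lambda>j. pm Dop (pm (cst (s i)) Y) j - pm (cst (der (s i))) Y j)" .
    have "pm (cst (der (s i))) Y = (\<lambda>j. pm Dop (pm (cst (s i)) Y) j - pm Dop Z j)"
      using e1 e2 Y(2) Z(2) by (simp add: fun_eq_iff algebra_simps)
    also have "\<dots> = pm Dop (\<lambda>j. pm (cst (s i)) Y j - Z j)"
      by (rule pm_diff_right'[symmetric]) (use Y Z in \<open>auto simp: diffop_pdo\<close>)
    finally show "ct (pm (cst (der (s i))) Y) = 0" using Y Z by (simp add: ct_Dop)
  qed
  have indY: "lin_indep_C der n (\<lambda>i. der (s i))"
    using IND[OF Suc.prems(4)] p0 by (simp add: s_def \<psi>0_def)
  obtain NY where NY: "is_wnl NY UNIV (span_C der n (\<lambda>i. der (s i)))" "pm NY Y = cst 1"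
    using Suc.IH[OF Y(1) Ynz dY indY ctY] by blast
  define T where "T = pm Dinv (cst \<psi>0)"
  define N where "N = pm NY T"
  have NYp: "is_pdo NY" using NY(1) wnl_pdo by blast
  have "pm N B = pm NY (pm (pm Dinv (cst \<psi>0)) B)" unfolding N_def T_def
    using NYp B by (simp add: pm_assoc' diffop_pdo)
  also have "pm (pm Dinv (cst \<psi>0)) B = Y"
    using B Y by (simp add: pm_assoc' diffop_pdo X_def[symmetric] DinvD)
  finally have NB: "pm N B = cst 1" using NY(2) by simp
  obtain E m p r where Er: "is_diffop E" "NY = (\<lambda>j. E j + WN m p r j)"
      "\<forall>i<m. p i \<in> UNIV \<and> r i \<in> span_C der n (\<lambda>i. der (s i))"
    using NY(1) unfolding is_wnl_def by blast
  have inS0: "\<psi>0 \<in> span_C der (Suc n) \<psi>" unfolding \<psi>0_def by (rule span_elem0)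
  have "N = (\<lambda>j. pm E T j + pm (WN m p r) T j)"
    unfolding N_def Er(2) by (rule pm_add_left') (use Er in \<open>auto simp: diffop_pdo T_def\<close>)
  moreover have "is_wnl (pm E T) UNIV (span_C der (Suc n) \<psi>)"
    unfolding T_def A2[OF Er(1)] using Er(1) inS0
    by (intro wnl_add wnl_diffop wnl_wn) auto
  moreover have "is_wnl (pm (WN m p r) T) UNIV (span_C der (Suc n) \<psi>)"
  proof -
    have "pm (WN m p r) T = (\<lambda>j. \<Sum>i<m. pm (wn (p i) (r i)) T j)"
      unfolding WN_def by (rule pm_sum_left') (auto simp: T_def)
    moreover have "is_wnl (\<lambda>j. \<Sum>i<m. pm (wn (p i) (r i)) T j) UNIV (span_C der (Suc n) \<psi>)"
    proof (rule wnl_sum)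
      fix i assume "i \<in> {..<m}"
      hence "r i \<in> span_C der n (\<lambda>i. der (s i))" using Er(3) by simp
      then obtain R where R: "R \<in> span_C der n s" "r i = der R" using span_der by blast
      have RS: "R * \<psi>0 \<in> span_C der (Suc n) \<psi>"
      proof -
        have "s = (\<lambda>i. \<psi> (Suc i) / \<psi> 0)" by (rule ext) (simp add: s_def \<psi>0_def)
        thus ?thesis using span_shift[of R n \<psi>] R(1) p0 by (simp add: \<psi>0_def)
      qed
      show "is_wnl (pm (wn (p i) (r i)) T) UNIV (span_C der (Suc n) \<psi>)"
        unfolding R(2) T_def A5 using inS0 RS
        by (intro wnl_diff wnl_wn) (auto simp: mult.commute)
    qed simp
    ultimately show ?thesis by simp
  qed
  ultimately have "is_wnl N UNIV (span_C der (Suc n) \<psi>)" using wnl_add by simp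
  thus ?case using NB by blast
qed

end

context dfld begin

lemma dord_Dm: "dord (Dm u) = 1" "Dm u \<noteq> (\<lambda>_. 0)"
proof -
  have a: "Dm u 1 = 1" "\<And>m. m > 1 \<Longrightarrow> Dm u m = 0" by (auto simp: Dm_def Dop_def cst_def)
  show "dord (Dm u) = 1" using dord_eq[of "Dm u" 1] a by simp
  show "Dm u \<noteq> (\<lambda>_. 0)"
  proof
    assume "Dm u = (\<lambda>_. 0)"
    hence "Dm u 1 = 0" by simp
    thus False using a(1) by simp
  qed
qed

lemma Dm_cst:
  assumes "u * f = der f"
  shows "pm (Dm u) (cst f) = pm (cst f) Dop"
proof -
  have "pm (Dm u) (cst f) = (\<lambda>j. pm Dop (cst f) j - pm (cst u) (cst f) j)"
    unfolding Dm_def by (rule pm_diff_left') auto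
  also have "pm (cst u) (cst f) = cst (der f)" using assms by (simp add: pm_cst_cst)
  also have "(\<lambda>j. pm Dop (cst f) j - cst (der f) j) = pm (cst f) Dop"
    unfolding D_cst by simp
  finally show ?thesis .
qed

lemma C2:
  "is_diffop B \<Longrightarrow> B \<noteq> (\<lambda>_. 0) \<Longrightarrow> dord B = n \<Longrightarrow> lin_indep_C der n \<phi> \<Longrightarrow>
    (\<forall>i<n. apply_op der B (\<phi> i) = 0) \<Longrightarrow> \<exists>N. is_wnl N (span_C der n \<phi>) UNIV \<and> pm B N = cst 1"
proof (induction n arbitrary: B \<phi>)
  case 0
  have b: "B = cst (B 0)" "B 0 \<noteq> 0" using dord0_cst 0 by blast+
  obtain c where c: "B = cst c" "c \<noteq> 0" using b by blast
  have "pm B (cst (inverse c)) = cst 1" unfolding c(1) using c(2) by (simp add: pm_cst_cst)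
  thus ?case using wnl_diffop[OF diffop_cst] by blast
next
  case (Suc n)
  note B = Suc.prems(1,2)
  define f0 where "f0 = \<phi> 0"
  have p0: "f0 \<noteq> 0" using indep_nz[OF Suc.prems(4)] by (simp add: f0_def)
  define u where "u = der f0 / f0"
  have uf: "u * f0 = der f0" using p0 by (simp add: u_def)
  have bB: "bnd B (int (dord B))" using dord_prop(2)[OF B] by (simp add: bnd_def)
  obtain Y r where Yr: "is_diffop Y" "B = (\<lambda>j. pm Y (Dm u) j + cst r j)"
    using rdiv_aux[OF B(1) bB] by blast
  have appB: "apply_op der B f = apply_op der Y (apply_op der (Dm u) f) + r * f" for f
    using Yr by (subst Yr(2)) (simp add: apply_add_op apply_pm)
  have "apply_op der (Dm u) f0 = 0" using uf by simp
  hence "r * f0 = 0" using appB[of f0] Suc.prems(5) by (simp add: f0_def)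
  hence r0: "r = 0" using p0 by simp
  have BY: "B = pm Y (Dm u)" using Yr(2) r0 by (simp add: cst_def)
  have Ynz: "Y \<noteq> (\<lambda>_. 0)" using BY B(2) by auto
  have "dord B = dord Y + 1" using dord_pm(1)[OF Yr(1) Ynz diffop_Dm dord_Dm(2)] BY dord_Dm(1) by simp
  hence dY: "dord Y = n" using Suc.prems(3) by simp
  define s where "s i = \<phi> (Suc i) / f0" for i
  define \<phi>' where "\<phi>' i = f0 * der (s i)" for i
  have ph': "apply_op der (Dm u) (\<phi> (Suc i)) = \<phi>' i" for i
    using dquot[OF p0, of "\<phi> (Suc i)"] by (simp add: \<phi>'_def s_def u_def)
  have kerY: "\<forall>i<n. apply_op der Y (\<phi>' i) = 0"
    using Suc.prems(5) appB r0 ph' by auto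
  have indY: "lin_indep_C der n \<phi>'"
    unfolding \<phi>'_def using indep_mult[OF IND[OF Suc.prems(4)] p0[unfolded f0_def]] p0
    by (simp add: s_def f0_def)
  obtain NY where NY: "is_wnl NY (span_C der n \<phi>') UNIV" "pm Y NY = cst 1"
    using Suc.IH[OF Yr(1) Ynz dY indY kerY] by blast
  have NYp: "is_pdo NY" using NY(1) wnl_pdo by blast
  define W where "W = pm (cst (inverse f0)) NY"
  define N where "N = pm (cst f0) (pm Dinv W)"
  have W: "is_pdo W" using NYp by (simp add: W_def)
  have "pm (Dm u) N = pm (pm (Dm u) (cst f0)) (pm Dinv W)"
    unfolding N_def using W by (simp add: pm_assoc' diffop_pdo)
  also have "\<dots> = pm (pm (cst f0) Dop) (pm Dinv W)" using Dm_cst[OF uf] by simp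
  also have "\<dots> = pm (cst f0) W" using W by (simp add: pm_assoc' DDinv)
  also have "\<dots> = NY" unfolding W_def using NYp p0 by (simp add: pm_assoc'[symmetric] pm_cst_cst)
  finally have "pm (Dm u) N = NY" .
  hence NB: "pm B N = cst 1" unfolding BY using NY(2) W Yr(1)
    by (simp add: pm_assoc' diffop_pdo N_def)
  obtain E m p r where Er: "is_diffop E" "NY = (\<lambda>j. E j + WN m p r j)"
      "\<forall>i<m. p i \<in> span_C der n \<phi>' \<and> r i \<in> UNIV"
    using NY(1) unfolding is_wnl_def by blast
  have inS0: "f0 \<in> span_C der (Suc n) \<phi>" unfolding f0_def by (rule span_elem0)
  define V where "V = span_C der (Suc n) \<phi>"
  have cV: "csub V" by (simp add: V_def csub_span)
  have WN': "W = (\<lambda>j. pm (cst (inverse f0)) E j + (\<Sum>i<m. wn (inverse f0 * p i) (r i) j))"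
  proof -
    have "W = (\<lambda>j. pm (cst (inverse f0)) E j + pm (cst (inverse f0)) (WN m p r) j)"
      unfolding W_def Er(2) by (rule pm_add_right') (use Er in \<open>auto simp: diffop_pdo\<close>)
    moreover have "pm (cst (inverse f0)) (WN m p r) = (\<lambda>j. \<Sum>i<m. wn (inverse f0 * p i) (r i) j)"
      unfolding WN_def by (subst pm_sum_right') (auto simp: wn_cst_left)
    ultimately show ?thesis by simp
  qed
  have "pm Dinv W = (\<lambda>j. pm Dinv (pm (cst (inverse f0)) E) j + pm Dinv (\<lambda>j. \<Sum>i<m. wn (inverse f0 * p i) (r i) j) j)"
    unfolding WN' by (rule pm_add_right') (use Er in \<open>auto simp: diffop_pdo\<close>)
  also have "pm Dinv (\<lambda>j. \<Sum>i<m. wn (inverse f0 * p i) (r i) j) = (\<lambda>j. \<Sum>i<m. pm Dinv (wn (inverse f0 * p i) (r i)) j)"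
    by (rule pm_sum_right') auto
  finally have DW: "pm Dinv W = (\<lambda>j. pm Dinv (pm (cst (inverse f0)) E) j + (\<Sum>i<m. pm Dinv (wn (inverse f0 * p i) (r i)) j))" .
  have "N = (\<lambda>j. pm (cst f0) (pm Dinv (pm (cst (inverse f0)) E)) j
      + pm (cst f0) (\<lambda>j. \<Sum>i<m. pm Dinv (wn (inverse f0 * p i) (r i)) j) j)"
    unfolding N_def DW by (rule pm_add_right') (use Er in \<open>auto simp: diffop_pdo\<close>)
  also have "pm (cst f0) (\<lambda>j. \<Sum>i<m. pm Dinv (wn (inverse f0 * p i) (r i)) j)
      = (\<lambda>j. \<Sum>i<m. pm (cst f0) (pm Dinv (wn (inverse f0 * p i) (r i))) j)"
    by (rule pm_sum_right') auto
  finally have Neq: "N = (\<lambda>j. pm (cst f0) (pm Dinv (pm (cst (inverse f0)) E)) j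
      + (\<Sum>i<m. pm (cst f0) (pm Dinv (wn (inverse f0 * p i) (r i))) j))" .
  have w1: "is_wnl (pm (cst f0) (pm Dinv (pm (cst (inverse f0)) E))) V UNIV"
    unfolding A7[OF Er(1)] using inS0 Er(1) quot(1)[of "pm (cst (inverse f0)) E"]
    by (intro wnl_add wnl_diffop wnl_wn) (auto simp: V_def)
  have w2: "is_wnl (\<lambda>j. \<Sum>i<m. pm (cst f0) (pm Dinv (wn (inverse f0 * p i) (r i))) j) V UNIV"
  proof (rule wnl_sum)
    fix i assume "i \<in> {..<m}"
    have "\<phi>' = (\<lambda>j. f0 * der (s j))" by (rule ext) (simp add: \<phi>'_def)
    hence pi: "p i \<in> span_C der n (\<lambda>j. f0 * der (s j))" using Er(3) \<open>i \<in> {..<m}\<close> by simp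
    have "inverse f0 * p i \<in> span_C der n (\<lambda>j. der (s j))" by (rule span_divide[OF pi p0])
    then obtain R where R: "R \<in> span_C der n s" "inverse f0 * p i = der R" using span_der by blast
    have RS: "R * f0 \<in> V"
    proof -
      have "s = (\<lambda>i. \<phi> (Suc i) / \<phi> 0)" by (rule ext) (simp add: s_def f0_def)
      thus ?thesis using span_shift[of R n \<phi>] R(1) p0 by (simp add: f0_def V_def)
    qed
    show "is_wnl (pm (cst f0) (pm Dinv (wn (inverse f0 * p i) (r i)))) V UNIV"
      unfolding R(2) A8 using inS0 RS cV
      by (intro wnl_diff wnl_wn) (auto simp: mult.commute V_def)
  qed simp
  have "is_wnl N V UNIV" unfolding Neq by (rule wnl_add[OF w1 w2])
  thus ?case using NB by (auto simp: V_def)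
qed

end

context dfld begin

lemma span_elem: "i < n \<Longrightarrow> g i \<in> span_C der n g"
proof -
  assume i: "i < n"
  have "(\<Sum>k<n. (if k = i then 1 else 0) * g k) = (\<Sum>k<n. if k = i then g k else 0)"
    by (rule sum.cong) auto
  also have "\<dots> = g i" using i by (simp add: sum.delta)
  finally show ?thesis unfolding span_C_def
    by (intro CollectI exI[of _ "\<lambda>k. if k = i then 1 else 0"]) auto
qed

lemma A_WN:
  assumes A: "is_diffop A"
  shows "\<exists>D. is_diffop D \<and> pm A (WN m p q) = (\<lambda>j. D j + WN m (\<lambda>i. apply_op der A (p i)) q j)"
proof -
  define D where "D = (\<lambda>j. \<Sum>i<m. pm (shD (pm A (cst (p i)))) (cst (q i)) j)"
  have Dd: "is_diffop D" unfolding D_def using A by (intro diffop_sum) simp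
  have "pm A (WN m p q) = (\<lambda>j. \<Sum>i<m. pm A (wn (p i) (q i)) j)"
    unfolding WN_def by (rule pm_sum_right') (use A in \<open>auto simp: diffop_pdo\<close>)
  also have "\<dots> = (\<lambda>j. D j + WN m (\<lambda>i. apply_op der A (p i)) q j)"
    by (simp add: A3[OF A] D_def WN_def sum.distrib)
  finally show ?thesis using Dd by blast
qed

lemma A_wnl:
  assumes A: "is_diffop A" and N: "is_wnl N Vp Vq"
  shows "is_wnl (pm A N) UNIV UNIV"
proof -
  obtain E m p q where E: "is_diffop E" "N = (\<lambda>j. E j + WN m p q j)"
    using N unfolding is_wnl_def by blast
  obtain D where D: "is_diffop D" "pm A (WN m p q) = (\<lambda>j. D j + WN m (\<lambda>i. apply_op der A (p i)) q j)"
    using A_WN[OF A] by blast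
  have "pm A N = (\<lambda>j. pm A E j + pm A (WN m p q) j)"
    unfolding E(2) by (rule pm_add_right') (use A E in \<open>auto simp: diffop_pdo\<close>)
  also have "\<dots> = (\<lambda>j. (\<lambda>j. pm A E j + D j) j + WN m (\<lambda>i. apply_op der A (p i)) q j)"
    by (simp add: D(2) add.assoc)
  finally show ?thesis unfolding is_wnl_def
    by (intro exI[of _ "\<lambda>j. pm A E j + D j"] exI[of _ m] exI[of _ "\<lambda>i. apply_op der A (p i)"] exI[of _ q])
      (use A E D in auto)
qed

lemma BN_kernel:
  assumes B: "is_diffop B" and E: "is_diffop E" and Lq: "lin_indep_C der m q"
    and BN: "pm B (\<lambda>j. E j + WN m p q j) = cst 1"
  shows "\<forall>i<m. apply_op der B (p i) = 0"
proof -
  obtain D where D: "is_diffop D" "pm B (WN m p q) = (\<lambda>j. D j + WN m (\<lambda>i. apply_op der B (p i)) q j)"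
    using A_WN[OF B] by blast
  have "pm B (\<lambda>j. E j + WN m p q j) = (\<lambda>j. pm B E j + pm B (WN m p q) j)"
    by (rule pm_add_right') (use B E in \<open>auto simp: diffop_pdo\<close>)
  hence eq: "cst 1 = (\<lambda>j. (pm B E j + D j) + WN m (\<lambda>i. apply_op der B (p i)) q j)"
    using BN D(2) by (simp add: add.assoc)
  have "\<forall>j<0. WN m (\<lambda>i. apply_op der B (p i)) q j = 0"
  proof (intro allI impI)
    fix j :: int assume j: "j < 0"
    have "cst 1 j = 0" using j by (simp add: cst_def)
    moreover have "pm B E j = 0" using diffop_neg[OF diffop_pm[OF B E] j] .
    moreover have "D j = 0" using diffop_neg[OF D(1) j] .
    ultimately show "WN m (\<lambda>i. apply_op der B (p i)) q j = 0" using fun_cong[OF eq, of j] by simp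
  qed
  hence S: "(\<Sum>i<m. apply_op der B (p i) * dk k (q i)) = 0" for k
    using WN_neg[of m "\<lambda>i. apply_op der B (p i)" q k] by auto
  show ?thesis using ms_lemma[OF Lq, of "\<lambda>i. apply_op der B (p i)"] S by blast
qed

lemma inv_two_sided:
  assumes N: "is_pdo N" and B: "is_diffop B" "B \<noteq> (\<lambda>_. 0)"
  shows "pm N B = cst 1 \<longleftrightarrow> pm B N = cst 1"
proof
  assume NB: "pm N B = cst 1"
  have "pm (pm B N) B = pm B (cst 1)" using N B NB by (simp add: pm_assoc' diffop_pdo)
  hence "pm (\<lambda>j. pm B N j - cst 1 j) B = (\<lambda>_. 0)"
    using N B by (subst pm_diff_left') (auto simp: diffop_pdo)
  hence "(\<lambda>j. pm B N j - cst 1 j) = (\<lambda>_. 0)"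
    using cancel_right[of "\<lambda>j. pm B N j - cst 1 j" B] N B by (simp add: diffop_pdo)
  thus "pm B N = cst 1" by (simp add: fun_eq_iff)
next
  assume BN: "pm B N = cst 1"
  have "pm B (pm N B) = pm (cst 1) B" using N B BN by (simp add: pm_assoc'[symmetric] diffop_pdo)
  hence "pm B (\<lambda>j. pm N B j - cst 1 j) = (\<lambda>_. 0)"
    using N B by (subst pm_diff_right') (auto simp: diffop_pdo)
  hence "(\<lambda>j. pm N B j - cst 1 j) = (\<lambda>_. 0)"
    using cancel_left[of "\<lambda>j. pm N B j - cst 1 j" B] N B by (simp add: diffop_pdo)
  thus "pm N B = cst 1" by (simp add: fun_eq_iff)
qed

lemma minimal_inv:
  assumes N: "is_pdo N" and B: "is_diffop B" "B \<noteq> (\<lambda>_. 0)" and NB: "pm N B = cst 1" and BN: "pm B N = cst 1"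
  shows "minimal_rfd der N (cst 1) B"
  unfolding minimal_rfd_def
proof (intro conjI allI impI)
  show "right_frac der N (cst 1) B" using B NB by (simp add: right_frac_def nz_iff)
  fix A' B' assume RF: "right_frac der N A' B'"
  have A': "is_diffop A'" "is_diffop B'" "pm N B' = A'" using RF by (auto simp: right_frac_def)
  have "B' = pm (pm B N) B'" using A' by (simp add: BN diffop_pdo)
  also have "\<dots> = pm B A'" using N B A' by (simp add: pm_assoc' diffop_pdo)
  finally show "\<exists>D. is_diffop D \<and> A' = pm (cst 1) D \<and> B' = pm B D"
    using A' by (intro exI[of _ A']) (simp add: diffop_pdo)
qed

lemma reduce_wnl:
  assumes "is_wnl N Vp Vq"
  shows "\<exists>E m p q. is_diffop E \<and> N = wnl_form der E m p q \<and> lin_indep_C der m p \<and> lin_indep_C der m q"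
proof -
  obtain E m p q where E: "is_diffop E" "N = (\<lambda>j. E j + WN m p q j)"
    using assms unfolding is_wnl_def by blast
  obtain m' p' q' where R: "WN m p q = WN m' p' q'" "lin_indep_C der m' p'" "lin_indep_C der m' q'"
    using reduce[OF csub_UNIV csub_UNIV, of m p q] by auto
  show ?thesis using E R by (intro exI[of _ E] exI[of _ m'] exI[of _ p'] exI[of _ q']) (simp add: wnl_eq)
qed

theorem main:
  assumes Lp: "is_pdo L" and MR: "minimal_rfd der L A B"
  shows "(weakly_nonlocal der L \<longleftrightarrow> full_kernel der B)
       \<and> (full_kernel der B \<longleftrightarrow> full_kernel der (adjoint der B))
       \<and> (\<forall>E n p q. is_diffop E \<and> L = wnl_form der E n p q
              \<and> lin_indep_C der n p \<and> lin_indep_C der n q \<longrightarrow>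
            dord B = n
            \<and> is_right_lcm der B n (\<lambda>i. inv_coeff_D (q i))
            \<and> kernel der (adjoint der B) = span_C der n q)"
proof -
  have RF: "right_frac der L A B" using MR unfolding minimal_rfd_def by blast
  have B: "is_diffop B" "B \<noteq> (\<lambda>_. 0)" and LBA: "pm L B = A" and Ad: "is_diffop A"
    using RF unfolding right_frac_def nz_iff by blast+
  have AB: "is_diffop (adjoint der B)" "adjoint der B \<noteq> (\<lambda>_. 0)" "dord (adjoint der B) = dord B"
    using adj_diffop[OF B(1)] dord_adj[OF B] by auto
  have P3: "\<forall>E n p q. is_diffop E \<and> L = wnl_form der E n p q
              \<and> lin_indep_C der n p \<and> lin_indep_C der n q \<longrightarrow>
            dord B = n \<and> is_right_lcm der B n (\<lambda>i. inv_coeff_D (q i))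
            \<and> kernel der (adjoint der B) = span_C der n q"
    using moreover_part[OF MR] by blast
  have inv_facts: "full_kernel der B \<and> full_kernel der (adjoint der B)"
    if N: "is_wnl N Vp Vq" and NB: "pm N B = cst 1" and BN: "pm B N = cst 1" for N Vp Vq
  proof -
    have Np: "is_pdo N" using N wnl_pdo by blast
    obtain E m p q where R: "is_diffop E" "N = wnl_form der E m p q" "lin_indep_C der m p" "lin_indep_C der m q"
      using reduce_wnl[OF N] by blast
    have MRN: "minimal_rfd der N (cst 1) B" by (rule minimal_inv[OF Np B NB BN])
    have M: "dord B = m \<and> kernel der (adjoint der B) = span_C der m q"
      using moreover_part[OF MRN R(1,2,3,4)] by blast
    have "\<forall>i<m. apply_op der B (p i) = 0"
      by (rule BN_kernel[OF B(1) R(1) R(4)]) (use BN R(2) in \<open>simp add: wnl_eq\<close>)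
    hence FK: "full_kernel der B" using full_kernel_intro[OF B] R(3) M by simp
    have "full_kernel der (adjoint der B)" unfolding full_kernel_def
      using M R(4) AB(3) by (intro exI[of _ q]) simp
    thus ?thesis using FK by blast
  qed
  have I13: "full_kernel der (adjoint der B)" if W: "weakly_nonlocal der L"
  proof -
    obtain E n p q where E: "is_diffop E" "L = wnl_form der E n p q" using W unfolding weakly_nonlocal_def by blast
    have "is_wnl L UNIV UNIV" unfolding is_wnl_def E(2) wnl_eq using E(1) by blast
    then obtain E' m p' q' where R: "is_diffop E'" "L = wnl_form der E' m p' q'" "lin_indep_C der m p'" "lin_indep_C der m q'"
      using reduce_wnl by blast
    have "dord B = m \<and> kernel der (adjoint der B) = span_C der m q'" using P3 R by blast
    thus ?thesis unfolding full_kernel_def using R(4) AB(3) by (intro exI[of _ q']) simp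
  qed
  have I3: "weakly_nonlocal der L \<and> full_kernel der B" if F: "full_kernel der (adjoint der B)"
  proof -
    obtain \<psi> where \<psi>: "lin_indep_C der (dord B) \<psi>" "span_C der (dord B) \<psi> = kernel der (adjoint der B)"
      using F AB(3) unfolding full_kernel_def by auto
    have ct: "\<forall>i<dord B. ct (pm (cst (\<psi> i)) B) = 0"
      using span_elem[of _ "dord B" \<psi>] \<psi>(2) ker_adj_iff[OF B(1)] by blast
    obtain N where N: "is_wnl N UNIV (span_C der (dord B) \<psi>)" "pm N B = cst 1"
      using C1[OF B refl \<psi>(1) ct] by blast
    have Np: "is_pdo N" using N(1) wnl_pdo by blast
    have BN: "pm B N = cst 1" using inv_two_sided[OF Np B] N(2) by blast
    have "L = pm L (pm B N)" using Lp by (simp add: BN)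
    also have "\<dots> = pm (pm L B) N" using Lp Np B by (simp add: pm_assoc' diffop_pdo)
    also have "\<dots> = pm A N" using LBA by simp
    finally have LA: "L = pm A N" .
    have "is_wnl L UNIV UNIV" unfolding LA by (rule A_wnl[OF Ad N(1)])
    hence "weakly_nonlocal der L" unfolding weakly_nonlocal_def using wnl_form_of by blast
    thus ?thesis using inv_facts[OF N(1) N(2) BN] by blast
  qed
  have I23: "full_kernel der (adjoint der B)" if F: "full_kernel der B"
  proof -
    obtain \<phi> where \<phi>: "lin_indep_C der (dord B) \<phi>" "span_C der (dord B) \<phi> = kernel der B"
      using F unfolding full_kernel_def by auto
    have ker: "\<forall>i<dord B. apply_op der B (\<phi> i) = 0"
      using span_elem[of _ "dord B" \<phi>] \<phi>(2) by (auto simp: kernel_def)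
    obtain N where N: "is_wnl N (span_C der (dord B) \<phi>) UNIV" "pm B N = cst 1"
      using C2[OF B refl \<phi>(1) ker] by blast
    have Np: "is_pdo N" using N(1) wnl_pdo by blast
    have NB: "pm N B = cst 1" using inv_two_sided[OF Np B] N(2) by blast
    show ?thesis using inv_facts[OF N(1) NB N(2)] by blast
  qed
  show ?thesis using P3 I13 I3 I23 by blast
qed

end

theorem lemma4p5:
  fixes der :: "'a::field_char_0 \<Rightarrow> 'a" and L A B :: "'a pdo"
  assumes "diff_field der"
    and "is_pdo L"
    and "minimal_rfd der L A B"
  shows "(weakly_nonlocal der L \<longleftrightarrow> full_kernel der B)
       \<and> (full_kernel der B \<longleftrightarrow> full_kernel der (adjoint der B))
       \<and> (\<forall>E n p q. is_diffop E \<and> L = wnl_form der E n p q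
              \<and> lin_indep_C der n p \<and> lin_indep_C der n q \<longrightarrow>
            dord B = n
            \<and> is_right_lcm der B n (\<lambda>i. inv_coeff_D (q i))
            \<and> kernel der (adjoint der B) = span_C der n q)"
proof -
  interpret d: dfld der by (rule diff_field_dfld[OF assms(1)])
  show ?thesis by (rule d.main[OF assms(2,3)])
qed


end
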